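(* Let $G_1,G_2$ be cubic graphs with $K'(G_1,3)=a$ and $K'(G_2,3)=b$. Then for any composition $G_1\,Y\,G_2$ and any composition $G_1\,H\,G_2$ (with any choices of distinguished vertices/edges and identifications), $K'(G_1\,Y\,G_2,3)=K'(G_1\,H\,G_2,3)=ab$.
   Context: Graphs are finite; multiple edges allowed, loops not. Compositions of cubic graphs $G_1,G_2$: (Y) choose a vertex $v_1\in G_1$ with incident edges $v_1s_{11},v_1s_{12},v_1s_{13}$ and a vertex $v_2\in G_2$ with incident edges $v_2s_{21},v_2s_{22},v_2s_{23}$ (in a chosen order); $G_1\,Y\,G_2$ is obtained from the disjoint union by deleting $v_1,v_2$ and adding the edges $s_{1j}s_{2j}$, $j=1,2,3$. (H) choose an edge $s_{11}s_{12}$ of $G_1$ and an edge $s_{21}s_{22}$ of $G_2$; $G_1\,H\,G_2$ is obtained from the disjoint union by deleting these two edges and adding the edges $s_{11}s_{21}$ and $s_{12}s_{22}$. A proper $3$-edge coloring assigns colors from $\{1,2,3\}$ to edges so that adjacent edges get different colors. An edge-Kempe chain (for colors $a\ne b$) is a connected component of the subgraph of edges colored $a$ or $b$; an edge-Kempe switch swaps $a,b$ on one chain. Colorings are edge-Kempe equivalent if related by a finite sequence of switches; $K'(G,3)$ is the number of equivalence classes of proper $3$-edge colorings of $G$. *)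

theory Defs
  imports Main "HOL-Library.FuncSet"
begin

text \<open>Finite multigraphs without loops: a vertex set, an edge set, and an
incidence map assigning to each edge its set of two distinct endpoints
(parallel edges are distinct edges with the same endpoints).\<close>

record ('v, 'e) mgraph =
  verts :: "'v set"
  edges :: "'e set"
  ends  :: "'e \<Rightarrow> 'v set"

definition wf_mgraph :: "('v, 'e) mgraph \<Rightarrow> bool" where
  "wf_mgraph G \<longleftrightarrow> finite (verts G) \<and> finite (edges G) \<and>
     (\<forall>e \<in> edges G. ends G e \<subseteq> verts G \<and> card (ends G e) = 2)"

definition inc :: "('v, 'e) mgraph \<Rightarrow> 'v \<Rightarrow> 'e set" where
  "inc G v = {e \<in> edges G. v \<in> ends G e}"

definition cubic :: "('v, 'e) mgraph \<Rightarrow> bool" where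
  "cubic G \<longleftrightarrow> wf_mgraph G \<and> (\<forall>v \<in> verts G. card (inc G v) = 3)"

definition other_end :: "('v, 'e) mgraph \<Rightarrow> 'e \<Rightarrow> 'v \<Rightarrow> 'v" where
  "other_end G e v = the_elem (ends G e - {v})"

definition proper_3ec :: "('v, 'e) mgraph \<Rightarrow> ('e \<Rightarrow> nat) set" where
  "proper_3ec G = {c \<in> edges G \<rightarrow>\<^sub>E {1, 2, 3}.
     \<forall>e \<in> edges G. \<forall>e' \<in> edges G. e \<noteq> e' \<and> ends G e \<inter> ends G e' \<noteq> {} \<longrightarrow> c e \<noteq> c e'}"

definition ab_adj :: "('v, 'e) mgraph \<Rightarrow> ('e \<Rightarrow> nat) \<Rightarrow> nat \<Rightarrow> nat \<Rightarrow> 'e \<Rightarrow> 'e \<Rightarrow> bool" where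
  "ab_adj G c a b e e' \<longleftrightarrow> e \<in> edges G \<and> e' \<in> edges G \<and> c e \<in> {a, b} \<and> c e' \<in> {a, b}
     \<and> ends G e \<inter> ends G e' \<noteq> {}"

definition kempe_chain :: "('v, 'e) mgraph \<Rightarrow> ('e \<Rightarrow> nat) \<Rightarrow> nat \<Rightarrow> nat \<Rightarrow> 'e set \<Rightarrow> bool" where
  "kempe_chain G c a b K \<longleftrightarrow>
     (\<exists>e0 \<in> edges G. c e0 \<in> {a, b} \<and> K = {e. (ab_adj G c a b)\<^sup>*\<^sup>* e0 e})"

definition kempe_switch :: "('e \<Rightarrow> nat) \<Rightarrow> nat \<Rightarrow> nat \<Rightarrow> 'e set \<Rightarrow> 'e \<Rightarrow> nat" where
  "kempe_switch c a b K = (\<lambda>e. if e \<in> K then (if c e = a then b else if c e = b then a else c e) else c e)"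

definition kempe_step :: "('v, 'e) mgraph \<Rightarrow> ('e \<Rightarrow> nat) \<Rightarrow> ('e \<Rightarrow> nat) \<Rightarrow> bool" where
  "kempe_step G c c' \<longleftrightarrow> c \<in> proper_3ec G \<and>
     (\<exists>a b K. a \<in> {1, 2, 3} \<and> b \<in> {1, 2, 3} \<and> a \<noteq> b \<and> kempe_chain G c a b K \<and>
        c' = kempe_switch c a b K)"

definition kempe_equiv :: "('v, 'e) mgraph \<Rightarrow> (('e \<Rightarrow> nat) \<times> ('e \<Rightarrow> nat)) set" where
  "kempe_equiv G = {(c, c'). c \<in> proper_3ec G \<and> (kempe_step G)\<^sup>*\<^sup>* c c'}"

text \<open>K'(G,3): number of edge-Kempe equivalence classes of proper 3-edge colourings.\<close>
definition K3 :: "('v, 'e) mgraph \<Rightarrow> nat" where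
  "K3 G = card (proper_3ec G // kempe_equiv G)"

text \<open>Y-composition: delete v1, v2; the bijection f between the edges at v1 and the
edges at v2 fixes the order; each pair (e, f e) becomes an edge joining the other
endpoint of e with the other endpoint of f e.\<close>
definition Y_comp :: "('v1, 'e1) mgraph \<Rightarrow> ('v2, 'e2) mgraph \<Rightarrow> 'v1 \<Rightarrow> 'v2 \<Rightarrow> ('e1 \<Rightarrow> 'e2)
    \<Rightarrow> ('v1 + 'v2, ('e1 + 'e2) + ('e1 \<times> 'e2)) mgraph" where
  "Y_comp G1 G2 v1 v2 f =
    \<lparr> verts = Inl ` (verts G1 - {v1}) \<union> Inr ` (verts G2 - {v2}),
      edges = Inl ` Inl ` (edges G1 - inc G1 v1) \<union> Inl ` Inr ` (edges G2 - inc G2 v2)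
              \<union> Inr ` {(e, f e) | e. e \<in> inc G1 v1},
      ends = (\<lambda>x. case x of
                Inl (Inl e) \<Rightarrow> Inl ` ends G1 e
              | Inl (Inr e) \<Rightarrow> Inr ` ends G2 e
              | Inr (e1, e2) \<Rightarrow> {Inl (other_end G1 e1 v1), Inr (other_end G2 e2 v2)}) \<rparr>"

text \<open>H-composition: delete edges d1, d2; the bijection g between the ends of d1 and
the ends of d2 fixes the identification; add edges x -- g x.\<close>
definition H_comp :: "('v1, 'e1) mgraph \<Rightarrow> ('v2, 'e2) mgraph \<Rightarrow> 'e1 \<Rightarrow> 'e2 \<Rightarrow> ('v1 \<Rightarrow> 'v2)
    \<Rightarrow> ('v1 + 'v2, ('e1 + 'e2) + ('v1 \<times> 'v2)) mgraph" where
  "H_comp G1 G2 d1 d2 g =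
    \<lparr> verts = Inl ` verts G1 \<union> Inr ` verts G2,
      edges = Inl ` Inl ` (edges G1 - {d1}) \<union> Inl ` Inr ` (edges G2 - {d2})
              \<union> Inr ` {(x, g x) | x. x \<in> ends G1 d1},
      ends = (\<lambda>x. case x of
                Inl (Inl e) \<Rightarrow> Inl ` ends G1 e
              | Inl (Inr e) \<Rightarrow> Inr ` ends G2 e
              | Inr (x1, x2) \<Rightarrow> {Inl x1, Inr x2}) \<rparr>"

end

theory Submission
  imports Defs
begin


definition sw :: "nat \<Rightarrow> nat \<Rightarrow> nat \<Rightarrow> nat" where
  "sw a b x = (if x = a then b else if x = b then a else x)"

lemma kempe_switch_sw: "kempe_switch c a b K = (\<lambda>e. if e \<in> K then sw a b (c e) else c e)"
  unfolding kempe_switch_def sw_def by (rule ext) auto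

definition closed :: "('v, 'e) mgraph \<Rightarrow> ('e \<Rightarrow> nat) \<Rightarrow> nat \<Rightarrow> nat \<Rightarrow> 'e set \<Rightarrow> bool" where
  "closed G c a b S \<longleftrightarrow> S \<subseteq> {e \<in> edges G. c e \<in> {a, b}} \<and>
      (\<forall>e e'. e \<in> S \<longrightarrow> ab_adj G c a b e e' \<longrightarrow> e' \<in> S)"

definition pm :: "('v, 'e) mgraph \<Rightarrow> (nat \<Rightarrow> nat) \<Rightarrow> ('e \<Rightarrow> nat) \<Rightarrow> 'e \<Rightarrow> nat" where
  "pm G \<pi> c = (\<lambda>e. if e \<in> edges G then \<pi> (c e) else undefined)"

definition perm3 :: "(nat \<Rightarrow> nat) \<Rightarrow> bool" where
  "perm3 \<pi> \<longleftrightarrow> bij_betw \<pi> {1,2,3} {1,2,3}"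

definition Nrel :: "('v, 'e) mgraph \<Rightarrow> 'e set \<Rightarrow> ('e \<Rightarrow> nat) \<Rightarrow> ('e \<Rightarrow> nat) \<Rightarrow> bool" where
  "Nrel G Sp c c' \<longleftrightarrow> c \<in> proper_3ec G \<and> (\<exists>a b S. a \<in> {1,2,3} \<and> b \<in> {1,2,3} \<and> a \<noteq> b \<and>
      closed G c a b S \<and> S \<inter> Sp = {} \<and> c' = kempe_switch c a b S)"

lemma proper_def2: "c \<in> proper_3ec G \<longleftrightarrow> (\<forall>e. e \<notin> edges G \<longrightarrow> c e = undefined) \<and>
   (\<forall>e \<in> edges G. c e \<in> {1,2,3}) \<and>
   (\<forall>e \<in> edges G. \<forall>e' \<in> edges G. e \<noteq> e' \<and> ends G e \<inter> ends G e' \<noteq> {} \<longrightarrow> c e \<noteq> c e')"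
  unfolding proper_3ec_def PiE_def Pi_def extensional_def by auto

lemma sw_in: "a \<in> {1,2,3} \<Longrightarrow> b \<in> {1,2,3} \<Longrightarrow> x \<in> {1,2,3::nat} \<Longrightarrow> sw a b x \<in> {1,2,3}"
  unfolding sw_def by auto

lemma sw_ab: "x \<in> {a,b} \<Longrightarrow> sw a b x \<in> {a,b}" unfolding sw_def by auto
lemma sw_nab: "x \<notin> {a,b} \<Longrightarrow> sw a b x = x" unfolding sw_def by auto
lemma sw_inj: "x \<in> {a,b} \<Longrightarrow> y \<in> {a,b} \<Longrightarrow> x \<noteq> y \<Longrightarrow> sw a b x \<noteq> sw a b y" unfolding sw_def by auto
lemma sw_sw: "sw a b (sw a b x) = x" unfolding sw_def by auto

lemma closed_sub: "closed G c a b S \<Longrightarrow> e \<in> S \<Longrightarrow> e \<in> edges G \<and> c e \<in> {a,b}"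
  unfolding closed_def by auto

lemma switch_neq1:
  assumes cl: "closed G c a b S" and eS: "e \<in> S" and e'S: "e' \<notin> S" and e': "e' \<in> edges G"
    and ee: "ends G e \<inter> ends G e' \<noteq> {}"
  shows "kempe_switch c a b S e \<noteq> kempe_switch c a b S e'"
proof -
  have e: "e \<in> edges G" "c e \<in> {a,b}" using closed_sub[OF cl eS] by auto
  have "c e' \<notin> {a,b}"
  proof
    assume "c e' \<in> {a,b}"
    hence "ab_adj G c a b e e'" using e e' ee unfolding ab_adj_def by blast
    hence "e' \<in> S" using cl eS unfolding closed_def by blast
    thus False using e'S by blast
  qed
  moreover have "kempe_switch c a b S e' = c e'" using e'S unfolding kempe_switch_sw by simp
  moreover have "kempe_switch c a b S e \<in> {a,b}" using eS e(2) sw_ab unfolding kempe_switch_sw by simp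
  ultimately show ?thesis by metis
qed

lemma switch_proper:
  assumes c: "c \<in> proper_3ec G" and cl: "closed G c a b S" and ab: "a \<in> {1,2,3}" "b \<in> {1,2,3}"
  shows "kempe_switch c a b S \<in> proper_3ec G"
  unfolding proper_def2
proof (intro conjI ballI allI impI)
  fix e assume "e \<notin> edges G" thus "kempe_switch c a b S e = undefined"
    using c cl unfolding proper_def2 closed_def kempe_switch_sw by auto
next
  fix e assume "e \<in> edges G" thus "kempe_switch c a b S e \<in> {1,2,3}"
    using c ab sw_in unfolding proper_def2 kempe_switch_sw by auto
next
  fix e e' assume e: "e \<in> edges G" "e' \<in> edges G" and ee: "e \<noteq> e' \<and> ends G e \<inter> ends G e' \<noteq> {}"
  have ne: "c e \<noteq> c e'" using c e ee unfolding proper_def2 by blast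
  have ee': "ends G e' \<inter> ends G e \<noteq> {}" using ee by blast
  show "kempe_switch c a b S e \<noteq> kempe_switch c a b S e'"
  proof (cases "e \<in> S")
    case True
    note eS = True
    show ?thesis
    proof (cases "e' \<in> S")
      case True
      have "c e \<in> {a,b}" "c e' \<in> {a,b}" using closed_sub[OF cl] eS True by auto
      hence "sw a b (c e) \<noteq> sw a b (c e')" using sw_inj ne by blast
      thus ?thesis using eS True unfolding kempe_switch_sw by simp
    next
      case False thus ?thesis using switch_neq1[OF cl eS False e(2)] ee by blast
    qed
  next
    case False
    note eS = False
    show ?thesis
    proof (cases "e' \<in> S")
      case True thus ?thesis using switch_neq1[OF cl True eS e(1) ee'] by metis
    next
      case False thus ?thesis using eS ne unfolding kempe_switch_sw by simp
    qed
  qed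
qed

lemma chain_closed:
  assumes "kempe_chain G c a b K" shows "closed G c a b K"
proof -
  obtain e0 where e0: "e0 \<in> edges G" "c e0 \<in> {a,b}" and K: "K = {e. (ab_adj G c a b)\<^sup>*\<^sup>* e0 e}"
    using assms unfolding kempe_chain_def by auto
  have "e \<in> edges G \<and> c e \<in> {a,b}" if "(ab_adj G c a b)\<^sup>*\<^sup>* e0 e" for e
    using that e0 by (induction rule: rtranclp_induct) (auto simp: ab_adj_def)
  moreover have "(ab_adj G c a b)\<^sup>*\<^sup>* e0 e'" if "(ab_adj G c a b)\<^sup>*\<^sup>* e0 e" "ab_adj G c a b e e'" for e e'
    using that by auto
  ultimately show ?thesis unfolding closed_def K by auto
qed

lemma ab_adj_sym: "ab_adj G c a b e e' \<Longrightarrow> ab_adj G c a b e' e"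
  unfolding ab_adj_def by auto

lemma switch_colors: "closed G c a b S \<Longrightarrow> (kempe_switch c a b S e \<in> {a,b}) = (c e \<in> {a,b})"
  unfolding kempe_switch_sw using closed_sub sw_ab by (metis (no_types, lifting) insertCI sw_nab)

lemma ab_adj_switch: assumes "closed G c a b S" shows "ab_adj G (kempe_switch c a b S) a b = ab_adj G c a b"
proof -
  have "\<And>e. (kempe_switch c a b S e \<in> {a,b}) = (c e \<in> {a,b})" using switch_colors[OF assms] .
  thus ?thesis unfolding ab_adj_def by (intro ext) (simp only:)
qed

lemma closed_switch: assumes "closed G c a b S" "closed G c a b T" shows "closed G (kempe_switch c a b S) a b T"
proof -
  have "\<And>e. (kempe_switch c a b S e \<in> {a,b}) = (c e \<in> {a,b})" using switch_colors[OF assms(1)] .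
  thus ?thesis using assms(2) unfolding closed_def ab_adj_switch[OF assms(1)] by simp
qed

lemma switch_switch: "closed G c a b S \<Longrightarrow> kempe_switch (kempe_switch c a b S) a b S = c"
  unfolding kempe_switch_sw by (auto simp: sw_sw)

lemma step_proper: "kempe_step G c c' \<Longrightarrow> c' \<in> proper_3ec G"
  unfolding kempe_step_def using switch_proper chain_closed by blast

lemma chain_switch:
  assumes "kempe_chain G c a b K" shows "kempe_chain G (kempe_switch c a b K) a b K"
proof -
  have cl: "closed G c a b K" by (rule chain_closed[OF assms])
  obtain e0 where e0: "e0 \<in> edges G" "c e0 \<in> {a,b}" and K: "K = {e. (ab_adj G c a b)\<^sup>*\<^sup>* e0 e}"
    using assms unfolding kempe_chain_def by auto
  show ?thesis unfolding kempe_chain_def ab_adj_switch[OF cl]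
    using e0 K switch_colors[OF cl] by auto
qed

lemma step_sym: "kempe_step G c c' \<Longrightarrow> kempe_step G c' c"
proof -
  assume "kempe_step G c c'"
  then obtain a b K where c: "c \<in> proper_3ec G" and ab: "a \<in> {1,2,3}" "b \<in> {1,2,3}" "a \<noteq> b"
    and K: "kempe_chain G c a b K" and c': "c' = kempe_switch c a b K"
    unfolding kempe_step_def by auto
  show ?thesis unfolding kempe_step_def
    using step_proper[OF \<open>kempe_step G c c'\<close>] ab chain_switch[OF K] c'
      switch_switch[OF chain_closed[OF K]] by metis
qed

lemma steps_proper: "(kempe_step G)\<^sup>*\<^sup>* c c' \<Longrightarrow> c \<in> proper_3ec G \<Longrightarrow> c' \<in> proper_3ec G"
  by (induction rule: rtranclp_induct) (auto intro: step_proper)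

lemma equiv_kempe: "equiv (proper_3ec G) (kempe_equiv G)"
proof (rule equivI)
  show "kempe_equiv G \<subseteq> proper_3ec G \<times> proper_3ec G"
    unfolding kempe_equiv_def using steps_proper by auto
  show "refl_on (proper_3ec G) (kempe_equiv G)"
    unfolding refl_on_def kempe_equiv_def using steps_proper by auto
  show "sym (kempe_equiv G)"
  proof (rule symI)
    fix c c' assume "(c, c') \<in> kempe_equiv G"
    hence "c \<in> proper_3ec G" "(kempe_step G)\<^sup>*\<^sup>* c c'" unfolding kempe_equiv_def by auto
    moreover have "(kempe_step G)\<^sup>*\<^sup>* c' c" using calculation(2)
      by (induction rule: rtranclp_induct) (auto intro: step_sym converse_rtranclp_into_rtranclp)
    ultimately show "(c', c) \<in> kempe_equiv G" unfolding kempe_equiv_def using steps_proper by auto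
  qed
  show "trans (kempe_equiv G)"
    unfolding trans_def kempe_equiv_def by auto
qed

lemma ke_trans: "(c, c') \<in> kempe_equiv G \<Longrightarrow> (c', c'') \<in> kempe_equiv G \<Longrightarrow> (c, c'') \<in> kempe_equiv G"
  using equiv_kempe[of G] unfolding equiv_def trans_def by blast
lemma ke_sym: "(c, c') \<in> kempe_equiv G \<Longrightarrow> (c', c) \<in> kempe_equiv G"
  using equiv_kempe[of G] unfolding equiv_def sym_def by blast
lemma ke_refl: "c \<in> proper_3ec G \<Longrightarrow> (c, c) \<in> kempe_equiv G"
  unfolding kempe_equiv_def by auto
lemma ke_proper: "(c, c') \<in> kempe_equiv G \<Longrightarrow> c \<in> proper_3ec G \<and> c' \<in> proper_3ec G"
  unfolding kempe_equiv_def using steps_proper by auto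

lemma closed_switch_equiv:
  assumes "finite (edges G)" "c \<in> proper_3ec G" "closed G c a b S" "a \<in> {1,2,3}" "b \<in> {1,2,3}" "a \<noteq> b"
  shows "(c, kempe_switch c a b S) \<in> kempe_equiv G"
  using assms
proof (induction "card S" arbitrary: c S rule: less_induct)
  case less
  show ?case
  proof (cases "S = {}")
    case True
    have "kempe_switch c a b S = c" unfolding True kempe_switch_def by auto
    thus ?thesis using less ke_refl by auto
  next
    case False
    then obtain e0 where e0: "e0 \<in> S" by auto
    have fS: "finite S" using less(2,4) closed_sub by (meson finite_subset subsetI)
    define K where "K = {e. (ab_adj G c a b)\<^sup>*\<^sup>* e0 e}"
    have ch: "kempe_chain G c a b K" unfolding kempe_chain_def K_def
      using closed_sub[OF less(4) e0] by auto
    have KS: "K \<subseteq> S"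
    proof
      fix e assume "e \<in> K" hence "(ab_adj G c a b)\<^sup>*\<^sup>* e0 e" unfolding K_def by auto
      thus "e \<in> S" using e0 less(4) unfolding closed_def by (induction rule: rtranclp_induct) auto
    qed
    have e0K: "e0 \<in> K" unfolding K_def by auto
    define c1 where "c1 = kempe_switch c a b K"
    have st: "kempe_step G c c1" unfolding kempe_step_def c1_def using less ch by auto
    have c1p: "c1 \<in> proper_3ec G" using step_proper[OF st] .
    have clK: "closed G c a b K" using chain_closed[OF ch] .
    have clSK: "closed G c a b (S - K)"
      unfolding closed_def
    proof (intro conjI allI impI)
      show "S - K \<subseteq> {e \<in> edges G. c e \<in> {a, b}}" using less(4) unfolding closed_def by auto
      fix e e' assume h: "e \<in> S - K" "ab_adj G c a b e e'"
      have h2: "ab_adj G c a b e' e" using ab_adj_sym[OF h(2)] .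
      have "e' \<notin> K"
      proof
        assume "e' \<in> K"
        hence "e \<in> K" using clK h2 unfolding closed_def by blast
        thus False using h(1) by blast
      qed
      moreover have "e' \<in> S" using less(4) h unfolding closed_def by blast
      ultimately show "e' \<in> S - K" by blast
    qed
    have cl1: "closed G c1 a b (S - K)" unfolding c1_def by (rule closed_switch[OF clK clSK])
    have lt: "card (S - K) < card S" by (rule psubset_card_mono) (use fS e0 e0K in auto)
    have IH: "(c1, kempe_switch c1 a b (S - K)) \<in> kempe_equiv G"
      using less(1)[OF lt less(2) c1p cl1 less(5,6,7)] .
    have eq: "kempe_switch c1 a b (S - K) = kempe_switch c a b S"
      unfolding c1_def kempe_switch_sw using KS by (auto intro!: ext)
    have "(c, c1) \<in> kempe_equiv G" unfolding kempe_equiv_def using st less by auto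
    thus ?thesis using IH eq ke_trans by metis
  qed
qed


lemma proper_val: "c \<in> proper_3ec G \<Longrightarrow> e \<in> edges G \<Longrightarrow> c e \<in> {1,2,3}"
  unfolding proper_def2 by blast
lemma proper_out: "c \<in> proper_3ec G \<Longrightarrow> e \<notin> edges G \<Longrightarrow> c e = undefined"
  unfolding proper_def2 by blast
lemma proper_adj: "c \<in> proper_3ec G \<Longrightarrow> e \<in> edges G \<Longrightarrow> e' \<in> edges G \<Longrightarrow> e \<noteq> e' \<Longrightarrow>
   ends G e \<inter> ends G e' \<noteq> {} \<Longrightarrow> c e \<noteq> c e'"
  unfolding proper_def2 by blast

lemma perm3_inj: "perm3 \<pi> \<Longrightarrow> x \<in> {1,2,3} \<Longrightarrow> y \<in> {1,2,3} \<Longrightarrow> \<pi> x = \<pi> y \<Longrightarrow> x = y"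
  unfolding perm3_def bij_betw_def inj_on_def by blast
lemma perm3_in: "perm3 \<pi> \<Longrightarrow> x \<in> {1,2,3} \<Longrightarrow> \<pi> x \<in> {1,2,3}"
  unfolding perm3_def bij_betw_def by blast

lemma pm_proper: assumes c: "c \<in> proper_3ec G" and p: "perm3 \<pi>" shows "pm G \<pi> c \<in> proper_3ec G"
  unfolding proper_def2
proof (intro conjI allI ballI impI)
  fix e assume "e \<notin> edges G" thus "pm G \<pi> c e = undefined" unfolding pm_def by simp
next
  fix e assume "e \<in> edges G" thus "pm G \<pi> c e \<in> {1,2,3}" unfolding pm_def using perm3_in[OF p proper_val[OF c]] by simp
next
  fix e e' assume e: "e \<in> edges G" "e' \<in> edges G" and ee: "e \<noteq> e' \<and> ends G e \<inter> ends G e' \<noteq> {}"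
  have "c e \<noteq> c e'" using proper_adj[OF c e] ee by blast
  hence "\<pi> (c e) \<noteq> \<pi> (c e')" using perm3_inj[OF p proper_val[OF c e(1)] proper_val[OF c e(2)]] by blast
  thus "pm G \<pi> c e \<noteq> pm G \<pi> c e'" unfolding pm_def using e by simp
qed

lemma pm_pm: "pm G \<sigma> (pm G \<pi> c) = pm G (\<sigma> \<circ> \<pi>) c"
  unfolding pm_def by auto

lemma pm_cong: assumes "c \<in> proper_3ec G" "\<And>x. x \<in> {1,2,3} \<Longrightarrow> \<pi> x = \<pi>' x" shows "pm G \<pi> c = pm G \<pi>' c"
proof
  fix e show "pm G \<pi> c e = pm G \<pi>' c e" unfolding pm_def using assms(2)[OF proper_val[OF assms(1)]] by simp
qed

lemma pm_id: assumes "c \<in> proper_3ec G" "\<And>x. x \<in> {1,2,3} \<Longrightarrow> \<pi> x = x" shows "pm G \<pi> c = c"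
proof
  fix e show "pm G \<pi> c e = c e" unfolding pm_def using assms(2)[OF proper_val[OF assms(1)]] proper_out[OF assms(1)] by simp
qed

lemma perm3_comp: "perm3 \<sigma> \<Longrightarrow> perm3 \<pi> \<Longrightarrow> perm3 (\<sigma> \<circ> \<pi>)"
  unfolding perm3_def using bij_betw_trans by blast

lemma perm3_sw: "a \<in> {1,2,3} \<Longrightarrow> b \<in> {1,2,3} \<Longrightarrow> perm3 (sw a b)"
  unfolding perm3_def bij_betw_def inj_on_def sw_def by auto

lemma perm3_id: "perm3 id" unfolding perm3_def by simp

lemma AB_closed: "closed G c a b {e \<in> edges G. c e \<in> {a,b}}"
  unfolding closed_def ab_adj_def by blast

lemma pm_sw: assumes "c \<in> proper_3ec G"
  shows "pm G (sw a b) c = kempe_switch c a b {e \<in> edges G. c e \<in> {a,b}}"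
proof
  fix e show "pm G (sw a b) c e = kempe_switch c a b {e \<in> edges G. c e \<in> {a,b}} e"
    unfolding pm_def kempe_switch_sw using proper_out[OF assms, of e] sw_nab[of "c e" a b] by auto
qed

lemma ke_pm_sw: assumes "finite (edges G)" "c \<in> proper_3ec G" "a \<in> {1,2,3}" "b \<in> {1,2,3}"
  shows "(c, pm G (sw a b) c) \<in> kempe_equiv G"
proof (cases "a = b")
  case True
  have "pm G (sw a b) c = c" using pm_id[OF assms(2)] True unfolding sw_def by auto
  thus ?thesis using ke_refl assms by metis
next
  case False
  thus ?thesis using closed_switch_equiv[OF assms(1,2) AB_closed assms(3,4)] pm_sw[OF assms(2)] by metis
qed

inductive swprod :: "(nat \<Rightarrow> nat) \<Rightarrow> bool" where
  "swprod id"
| "a \<in> {1,2,3} \<Longrightarrow> b \<in> {1,2,3} \<Longrightarrow> swprod \<pi> \<Longrightarrow> swprod (sw a b \<circ> \<pi>)"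

lemma swprod_perm3: "swprod \<pi> \<Longrightarrow> perm3 \<pi>"
proof (induction rule: swprod.induct)
  case 1 show ?case by (rule perm3_id)
next
  case (2 a b \<pi>) show ?case by (rule perm3_comp[OF perm3_sw[OF 2(1,2)] 2(4)])
qed

lemma ke_pm: assumes "finite (edges G)" "c \<in> proper_3ec G" "swprod \<pi>"
  shows "(c, pm G \<pi> c) \<in> kempe_equiv G"
  using assms(3)
proof (induction rule: swprod.induct)
  case 1
  have "pm G id c = c" using pm_id[OF assms(2)] by simp
  thus ?case using ke_refl[OF assms(2)] by metis
next
  case (2 a b \<pi>)
  have p: "pm G \<pi> c \<in> proper_3ec G" using pm_proper[OF assms(2) swprod_perm3[OF 2(3)]] .
  have "(pm G \<pi> c, pm G (sw a b) (pm G \<pi> c)) \<in> kempe_equiv G" using ke_pm_sw[OF assms(1) p 2(1,2)] .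
  thus ?case unfolding pm_pm using 2(4) ke_trans by blast
qed

lemma Nrel_proper: "Nrel G Sp c c' \<Longrightarrow> c' \<in> proper_3ec G"
  unfolding Nrel_def using switch_proper by blast

lemma Nrels_ke: assumes "finite (edges G)" "(Nrel G Sp)\<^sup>*\<^sup>* c c'" "c \<in> proper_3ec G"
  shows "(c, c') \<in> kempe_equiv G"
  using assms(2,3)
proof (induction rule: rtranclp_induct)
  case base thus ?case using ke_refl by blast
next
  case (step y z)
  have "(y, z) \<in> kempe_equiv G" using step(2) closed_switch_equiv[OF assms(1)] unfolding Nrel_def by blast
  thus ?case using step ke_trans by blast
qed

lemma perm3_mem: "perm3 \<sigma> \<Longrightarrow> x \<in> {1,2,3} \<Longrightarrow> a \<in> {1,2,3} \<Longrightarrow> b \<in> {1,2,3} \<Longrightarrow>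
    (\<sigma> x \<in> {\<sigma> a, \<sigma> b}) = (x \<in> {a,b})"
  using perm3_inj by blast

lemma Nrel_pm: assumes N: "Nrel G Sp c c'" and s: "perm3 \<sigma>"
  shows "Nrel G Sp (pm G \<sigma> c) (pm G \<sigma> c')"
proof -
  obtain a b S where c: "c \<in> proper_3ec G" and ab: "a \<in> {1,2,3}" "b \<in> {1,2,3}" "a \<noteq> b"
    and cl: "closed G c a b S" and Sp: "S \<inter> Sp = {}" and c': "c' = kempe_switch c a b S"
    using N unfolding Nrel_def by blast
  have mem: "e \<in> edges G \<Longrightarrow> (pm G \<sigma> c e \<in> {\<sigma> a, \<sigma> b}) = (c e \<in> {a,b})" for e
    unfolding pm_def using perm3_mem[OF s proper_val[OF c] ab(1,2)] by simp
  have adj: "ab_adj G (pm G \<sigma> c) (\<sigma> a) (\<sigma> b) = ab_adj G c a b"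
    unfolding ab_adj_def using mem by (intro ext) blast
  have cl': "closed G (pm G \<sigma> c) (\<sigma> a) (\<sigma> b) S"
    using cl mem unfolding closed_def adj by blast
  have eq: "pm G \<sigma> c' = kempe_switch (pm G \<sigma> c) (\<sigma> a) (\<sigma> b) S"
  proof
    fix e show "pm G \<sigma> c' e = kempe_switch (pm G \<sigma> c) (\<sigma> a) (\<sigma> b) S e"
    proof (cases "e \<in> S")
      case True
      hence "e \<in> edges G" "c e \<in> {a,b}" using closed_sub[OF cl] by auto
      thus ?thesis using True unfolding c' pm_def kempe_switch_sw sw_def by auto
    next
      case False thus ?thesis unfolding c' pm_def kempe_switch_sw by auto
    qed
  qed
  have "\<sigma> a \<noteq> \<sigma> b" using perm3_inj[OF s ab(1,2)] ab(3) by blast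
  thus ?thesis unfolding Nrel_def using pm_proper[OF c s] perm3_in[OF s] ab cl' Sp eq by blast
qed

lemma Nrels_pm: assumes "(Nrel G Sp)\<^sup>*\<^sup>* c c'" "perm3 \<sigma>" shows "(Nrel G Sp)\<^sup>*\<^sup>* (pm G \<sigma> c) (pm G \<sigma> c')"
  using assms(1)
proof (induction rule: rtranclp_induct)
  case base show ?case by (rule rtranclp.rtrancl_refl)
next
  case (step y z) show ?case using step(3) Nrel_pm[OF step(2) assms(2)] by (metis rtranclp.rtrancl_into_rtrancl)
qed

lemma N_trick:
  assumes fin: "finite (edges G)" and SpE: "Sp \<subseteq> edges G"
    and Spadj: "\<And>e e'. e \<in> Sp \<Longrightarrow> e' \<in> Sp \<Longrightarrow> ends G e \<inter> ends G e' \<noteq> {}"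
    and ke: "(c, c') \<in> kempe_equiv G"
  shows "\<exists>\<pi>. swprod \<pi> \<and> (Nrel G Sp)\<^sup>*\<^sup>* (pm G \<pi> c) c'"
proof -
  have c: "c \<in> proper_3ec G" and st: "(kempe_step G)\<^sup>*\<^sup>* c c'" using ke unfolding kempe_equiv_def by auto
  from st show ?thesis
  proof (induction rule: rtranclp_induct)
    case base
    have "pm G id c = c" using pm_id[OF c] by auto
    thus ?case using swprod.intros(1) by (metis rtranclp.rtrancl_refl)
  next
    case (step y z)
    obtain \<pi> where pi: "swprod \<pi>" and N: "(Nrel G Sp)\<^sup>*\<^sup>* (pm G \<pi> c) y" using step(3) by blast
    obtain a b K where y: "y \<in> proper_3ec G" and ab: "a \<in> {1,2,3}" "b \<in> {1,2,3}" "a \<noteq> b"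
      and K: "kempe_chain G y a b K" and z: "z = kempe_switch y a b K"
      using step(2) unfolding kempe_step_def by blast
    have clK: "closed G y a b K" using chain_closed[OF K] .
    show ?case
    proof (cases "K \<inter> Sp = {}")
      case True
      have "Nrel G Sp y z" unfolding Nrel_def using y ab clK True z by blast
      thus ?thesis using pi N by (metis rtranclp.rtrancl_into_rtrancl)
    next
      case False
      then obtain e0 where e0: "e0 \<in> K" "e0 \<in> Sp" by blast
      define T where "T = {e \<in> edges G. y e \<in> {a,b}} - K"
      have clT: "closed G y a b T" unfolding closed_def T_def
      proof (intro conjI allI impI)
        fix e e' assume h: "e \<in> {e \<in> edges G. y e \<in> {a, b}} - K" "ab_adj G y a b e e'"
        have "e' \<notin> K"
        proof
          assume "e' \<in> K" hence "e \<in> K" using clK ab_adj_sym[OF h(2)] unfolding closed_def by blast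
          thus False using h by blast
        qed
        thus "e' \<in> {e \<in> edges G. y e \<in> {a, b}} - K" using h(2) unfolding ab_adj_def by blast
      qed blast
      have TSp: "T \<inter> Sp = {}"
      proof (rule ccontr)
        assume "T \<inter> Sp \<noteq> {}"
        then obtain e where e: "e \<in> T" "e \<in> Sp" by blast
        have "ab_adj G y a b e0 e" unfolding ab_adj_def using closed_sub[OF clK e0(1)] e Spadj[OF e0(2) e(2)]
          unfolding T_def by blast
        hence "e \<in> K" using clK e0 unfolding closed_def by blast
        thus False using e unfolding T_def by blast
      qed
      define d where "d = kempe_switch y a b T"
      have Nd: "Nrel G Sp y d" unfolding Nrel_def d_def using y ab clT TSp by blast
      have zd: "z = pm G (sw a b) d"
      proof
        fix e show "z e = pm G (sw a b) d e"
        proof (cases "e \<in> edges G")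
          case False
          have "e \<notin> K" using closed_sub[OF clK] False by blast
          thus ?thesis using False proper_out[OF y False] unfolding z pm_def by (simp add: kempe_switch_sw)
        next
          case True
          show ?thesis
          proof (cases "e \<in> K")
            case True
            hence "e \<notin> T" unfolding T_def by blast
            thus ?thesis using True \<open>e \<in> edges G\<close> unfolding z d_def pm_def kempe_switch_sw by simp
          next
            case False
            show ?thesis
            proof (cases "y e \<in> {a,b}")
              case True
              hence "e \<in> T" unfolding T_def using False \<open>e \<in> edges G\<close> by blast
              thus ?thesis using False \<open>e \<in> edges G\<close> unfolding z d_def pm_def kempe_switch_sw by (simp add: sw_sw)
            next
              case F2: False
              hence "e \<notin> T" unfolding T_def by blast
              thus ?thesis using False F2 \<open>e \<in> edges G\<close> sw_nab unfolding z d_def pm_def kempe_switch_sw by simp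
            qed
          qed
        qed
      qed
      have s: "perm3 (sw a b)" using perm3_sw ab by blast
      have "(Nrel G Sp)\<^sup>*\<^sup>* (pm G \<pi> c) d" using N Nd by (metis rtranclp.rtrancl_into_rtrancl)
      hence "(Nrel G Sp)\<^sup>*\<^sup>* (pm G (sw a b) (pm G \<pi> c)) z" using Nrels_pm[OF _ s] zd by simp
      thus ?thesis unfolding pm_pm using swprod.intros(2)[OF ab(1,2) pi] by blast
    qed
  qed
qed


subsection \<open>Counting\<close>

lemma double_count:
  assumes "finite F" "finite W" "F \<subseteq> edges G"
  shows "(\<Sum>u\<in>W. card (inc G u \<inter> F)) = (\<Sum>e\<in>F. card (ends G e \<inter> W))"
proof -
  have 1: "card (inc G u \<inter> F) = (\<Sum>e\<in>F. if u \<in> ends G e then 1 else 0)" for u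
  proof -
    have "inc G u \<inter> F = {e \<in> F. u \<in> ends G e}" unfolding inc_def using assms(3) by blast
    thus ?thesis using assms(1) by (simp add: sum.inter_filter[symmetric])
  qed
  have 2: "card (ends G e \<inter> W) = (\<Sum>u\<in>W. if u \<in> ends G e then 1 else 0)" for e
  proof -
    have "ends G e \<inter> W = {u \<in> W. u \<in> ends G e}" by blast
    thus ?thesis using assms(2) by (simp add: sum.inter_filter[symmetric])
  qed
  show ?thesis unfolding 1 2 by (rule sum.swap)
qed

lemma card_inter_inc: "finite F \<Longrightarrow> F \<subseteq> edges G \<Longrightarrow> card (F \<inter> inc G v) = (\<Sum>e\<in>F. if v \<in> ends G e then 1 else 0)"
proof -
  assume a: "finite F" "F \<subseteq> edges G"
  have "F \<inter> inc G v = {e \<in> F. v \<in> ends G e}" unfolding inc_def using a by blast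
  thus ?thesis using a by (simp add: sum.inter_filter[symmetric])
qed

lemma parity_v:
  assumes wf: "wf_mgraph G" and F: "F \<subseteq> edges G"
  shows "2 * card F = (\<Sum>u\<in>verts G - {v}. card (inc G u \<inter> F)) + card (F \<inter> inc G v)"
proof -
  have fin: "finite F" "finite (verts G - {v})" using wf F finite_subset unfolding wf_mgraph_def by auto
  have e: "card (ends G e \<inter> (verts G - {v})) + (if v \<in> ends G e then 1 else 0) = 2" if "e \<in> F" for e
  proof -
    have "ends G e \<subseteq> verts G" "card (ends G e) = 2" using wf that F unfolding wf_mgraph_def by auto
    moreover hence "ends G e \<inter> (verts G - {v}) = ends G e - {v}" by blast
    ultimately show ?thesis by (simp add: card_Diff_singleton_if)
  qed
  have "(\<Sum>u\<in>verts G - {v}. card (inc G u \<inter> F)) + card (F \<inter> inc G v)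
     = (\<Sum>e\<in>F. card (ends G e \<inter> (verts G - {v})) + (if v \<in> ends G e then 1 else 0))"
    unfolding double_count[OF fin F] card_inter_inc[OF fin(1) F] sum.distrib by simp
  also have "\<dots> = (\<Sum>e\<in>F. 2)" using e by (rule sum.cong[OF refl])
  finally show ?thesis by simp
qed

lemma parity_all:
  assumes wf: "wf_mgraph G" and F: "F \<subseteq> edges G"
  shows "2 * card F = (\<Sum>u\<in>verts G. card (inc G u \<inter> F))"
proof -
  have fin: "finite F" "finite (verts G)" using wf F finite_subset unfolding wf_mgraph_def by auto
  have e: "card (ends G e \<inter> verts G) = 2" if "e \<in> F" for e
  proof -
    have "ends G e \<subseteq> verts G" "card (ends G e) = 2" using wf that F unfolding wf_mgraph_def by auto
    thus ?thesis by (simp add: Int_absorb2)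
  qed
  have "(\<Sum>u\<in>verts G. card (inc G u \<inter> F)) = (\<Sum>e\<in>F. 2)"
    unfolding double_count[OF fin F] using e by (rule sum.cong[OF refl])
  thus ?thesis by simp
qed

lemma vert_bij0: assumes "card A = 3" "inj_on c A" "c ` A \<subseteq> {1,2,3::nat}" shows "bij_betw c A {1,2,3}"
proof -
  have "card (c ` A) = 3" using card_image[OF assms(2)] assms(1) by simp
  moreover have "card {1,2,3::nat} = 3" by simp
  ultimately have "c ` A = {1,2,3}" using card_subset_eq[OF _ assms(3)] by simp
  thus ?thesis unfolding bij_betw_def using assms(2) by blast
qed

lemma bij_count: "bij_betw c A {1,2,3::nat} \<Longrightarrow> B \<subseteq> {1,2,3} \<Longrightarrow> card {e \<in> A. c e \<in> B} = card B"
proof -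
  assume b: "bij_betw c A {1,2,3::nat}" and B: "B \<subseteq> {1,2,3}"
  have "bij_betw c {e \<in> A. c e \<in> B} B" using b B unfolding bij_betw_def inj_on_def by auto
  thus ?thesis by (rule bij_betw_same_card)
qed

lemma proper_inj_inc: "c \<in> proper_3ec G \<Longrightarrow> inj_on c (inc G u)"
  unfolding inj_on_def inc_def using proper_adj by fastforce

lemma proper_bij_inc: assumes "c \<in> proper_3ec G" "card (inc G u) = 3" shows "bij_betw c (inc G u) {1,2,3}"
proof -
  have "c ` inc G u \<subseteq> {1,2,3}" using proper_val[OF assms(1)] unfolding inc_def by blast
  thus ?thesis using vert_bij0[OF assms(2) proper_inj_inc[OF assms(1)]] by blast
qed

lemma closed_vertex:
  assumes c: "c \<in> proper_3ec G" and cl: "closed G c a b K" and ab: "a \<in> {1,2,3}" "b \<in> {1,2,3}" "a \<noteq> b"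
    and u: "card (inc G u) = 3"
  shows "inc G u \<inter> K = {} \<or> inc G u \<inter> K = {e \<in> inc G u. c e \<in> {a,b}}"
proof (cases "inc G u \<inter> K = {}")
  case False
  then obtain e where e: "e \<in> inc G u" "e \<in> K" by blast
  have "{e \<in> inc G u. c e \<in> {a,b}} \<subseteq> K"
  proof
    fix e' assume "e' \<in> {e \<in> inc G u. c e \<in> {a,b}}"
    hence "ab_adj G c a b e e'" using e closed_sub[OF cl e(2)] unfolding ab_adj_def inc_def by blast
    thus "e' \<in> K" using cl e unfolding closed_def by blast
  qed
  thus ?thesis using closed_sub[OF cl] by blast
qed simp

lemma card_ab: "bij_betw c A {1,2,3::nat} \<Longrightarrow> a \<in> {1,2,3} \<Longrightarrow> b \<in> {1,2,3} \<Longrightarrow> a \<noteq> b \<Longrightarrow>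
   card {e \<in> A. c e \<in> {a,b}} = 2"
  using bij_count[of c A "{a,b}"] by auto


lemma quot_prod_card:
  assumes eq: "equiv P R" "equiv P1 R1" "equiv P2 R2"
    and into: "\<And>c. c \<in> P \<Longrightarrow> r1 c \<in> P1 \<and> r2 c \<in> P2"
    and iff: "\<And>c c'. c \<in> P \<Longrightarrow> c' \<in> P \<Longrightarrow> (c, c') \<in> R \<longleftrightarrow> (r1 c, r1 c') \<in> R1 \<and> (r2 c, r2 c') \<in> R2"
    and sur: "\<And>c1 c2. c1 \<in> P1 \<Longrightarrow> c2 \<in> P2 \<Longrightarrow> \<exists>c \<in> P. (r1 c, c1) \<in> R1 \<and> (r2 c, c2) \<in> R2"
  shows "card (P // R) = card (P1 // R1) * card (P2 // R2)"
proof -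
  define \<Phi> where "\<Phi> X = (R1 `` (r1 ` X), R2 `` (r2 ` X))" for X
  have cls: "\<Phi> (R `` {c}) = (R1 `` {r1 c}, R2 `` {r2 c})" if c: "c \<in> P" for c
  proof -
    have "R1 `` (r1 ` (R `` {c})) = R1 `` {r1 c}"
    proof
      show "R1 `` (r1 ` (R `` {c})) \<subseteq> R1 `` {r1 c}"
      proof
        fix x assume "x \<in> R1 `` (r1 ` (R `` {c}))"
        then obtain c' where c': "(c, c') \<in> R" "(r1 c', x) \<in> R1" by blast
        have "c' \<in> P" using c'(1) eq(1) unfolding equiv_def by blast
        hence "(r1 c, r1 c') \<in> R1" using iff[OF c] c'(1) by blast
        thus "x \<in> R1 `` {r1 c}" using c'(2) eq(2) unfolding equiv_def trans_def by blast
      qed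
      show "R1 `` {r1 c} \<subseteq> R1 `` (r1 ` (R `` {c}))"
        using equiv_class_self[OF eq(1) c] by blast
    qed
    moreover have "R2 `` (r2 ` (R `` {c})) = R2 `` {r2 c}"
    proof
      show "R2 `` (r2 ` (R `` {c})) \<subseteq> R2 `` {r2 c}"
      proof
        fix x assume "x \<in> R2 `` (r2 ` (R `` {c}))"
        then obtain c' where c': "(c, c') \<in> R" "(r2 c', x) \<in> R2" by blast
        have "c' \<in> P" using c'(1) eq(1) unfolding equiv_def by blast
        hence "(r2 c, r2 c') \<in> R2" using iff[OF c] c'(1) by blast
        thus "x \<in> R2 `` {r2 c}" using c'(2) eq(3) unfolding equiv_def trans_def by blast
      qed
      show "R2 `` {r2 c} \<subseteq> R2 `` (r2 ` (R `` {c}))"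
        using equiv_class_self[OF eq(1) c] by blast
    qed
    ultimately show ?thesis unfolding \<Phi>_def by simp
  qed
  have "bij_betw \<Phi> (P // R) (P1 // R1 \<times> P2 // R2)"
    unfolding bij_betw_def
  proof (intro conjI)
    show "inj_on \<Phi> (P // R)"
    proof (rule inj_onI)
      fix X Y assume X: "X \<in> P // R" and Y: "Y \<in> P // R" and e: "\<Phi> X = \<Phi> Y"
      obtain c where c: "c \<in> P" "X = R `` {c}" using X by (auto elim: quotientE)
      obtain d where d: "d \<in> P" "Y = R `` {d}" using Y by (auto elim: quotientE)
      have "R1 `` {r1 c} = R1 `` {r1 d}" "R2 `` {r2 c} = R2 `` {r2 d}" using e cls c d by auto
      hence "(r1 c, r1 d) \<in> R1" "(r2 c, r2 d) \<in> R2"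
        using eq_equiv_class_iff[OF eq(2)] eq_equiv_class_iff[OF eq(3)] into c d by blast+
      hence "(c, d) \<in> R" using iff c d by blast
      thus "X = Y" using c d eq_equiv_class_iff[OF eq(1)] by blast
    qed
    show "\<Phi> ` (P // R) = P1 // R1 \<times> P2 // R2"
    proof
      show "\<Phi> ` (P // R) \<subseteq> P1 // R1 \<times> P2 // R2"
      proof
        fix Z assume "Z \<in> \<Phi> ` (P // R)"
        then obtain c where c: "c \<in> P" "Z = \<Phi> (R `` {c})" by (auto elim!: quotientE)
        have "R1 `` {r1 c} \<in> P1 // R1" "R2 `` {r2 c} \<in> P2 // R2" using into[OF c(1)] quotientI by metis+
        thus "Z \<in> P1 // R1 \<times> P2 // R2" using c cls by simp
      qed
      show "P1 // R1 \<times> P2 // R2 \<subseteq> \<Phi> ` (P // R)"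
      proof
        fix Z assume "Z \<in> P1 // R1 \<times> P2 // R2"
        then obtain c1 c2 where z: "c1 \<in> P1" "c2 \<in> P2" "Z = (R1 `` {c1}, R2 `` {c2})"
          by (auto elim!: quotientE)
        obtain c where c: "c \<in> P" "(r1 c, c1) \<in> R1" "(r2 c, c2) \<in> R2" using sur[OF z(1,2)] by blast
        have "R1 `` {r1 c} = R1 `` {c1}" "R2 `` {r2 c} = R2 `` {c2}"
          using c equiv_class_eq[OF eq(2)] equiv_class_eq[OF eq(3)] by blast+
        hence "\<Phi> (R `` {c}) = Z" using cls[OF c(1)] z by simp
        thus "Z \<in> \<Phi> ` (P // R)" using quotientI[OF c(1)] by blast
      qed
    qed
  qed
  thus ?thesis using bij_betw_same_card card_cartesian_product by metis
qed

lemma comp_card: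
  fixes C :: "('w, 'f) mgraph" and G1 :: "('v1, 'e1) mgraph" and G2 :: "('v2, 'e2) mgraph"
  assumes fin: "finite (edges C)" "finite (edges G1)" "finite (edges G2)"
    and SpA: "SpA \<subseteq> edges G1" "\<And>e e'. e \<in> SpA \<Longrightarrow> e' \<in> SpA \<Longrightarrow> ends G1 e \<inter> ends G1 e' \<noteq> {}"
    and SpB: "SpB \<subseteq> edges G2" "\<And>e e'. e \<in> SpB \<Longrightarrow> e' \<in> SpB \<Longrightarrow> ends G2 e \<inter> ends G2 e' \<noteq> {}"
    and rp: "\<And>c. c \<in> proper_3ec C \<Longrightarrow> rA c \<in> proper_3ec G1 \<and> rB c \<in> proper_3ec G2"
    and rinj: "\<And>c c'. c \<in> proper_3ec C \<Longrightarrow> c' \<in> proper_3ec C \<Longrightarrow> rA c = rA c' \<Longrightarrow> rB c = rB c' \<Longrightarrow> c = c'"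
    and down: "\<And>c c'. kempe_step C c c' \<Longrightarrow> (rA c, rA c') \<in> kempe_equiv G1 \<and> (rB c, rB c') \<in> kempe_equiv G2"
    and lift1: "\<And>c h. c \<in> proper_3ec C \<Longrightarrow> Nrel G1 SpA (rA c) h \<Longrightarrow>
                  \<exists>c'. (c, c') \<in> kempe_equiv C \<and> rA c' = h \<and> rB c' = rB c"
    and lift2: "\<And>c h. c \<in> proper_3ec C \<Longrightarrow> Nrel G2 SpB (rB c) h \<Longrightarrow>
                  \<exists>c'. (c, c') \<in> kempe_equiv C \<and> rB c' = h \<and> rA c' = rA c"
    and pmc: "\<And>\<pi> c. perm3 \<pi> \<Longrightarrow> c \<in> proper_3ec C \<Longrightarrow>
                rA (pm C \<pi> c) = pm G1 \<pi> (rA c) \<and> rB (pm C \<pi> c) = pm G2 \<pi> (rB c)"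
    and fin2: "\<And>c c' \<pi>. c \<in> proper_3ec C \<Longrightarrow> c' \<in> proper_3ec C \<Longrightarrow> perm3 \<pi> \<Longrightarrow>
                 rB c = rB c' \<Longrightarrow> rA c = pm G1 \<pi> (rA c') \<Longrightarrow> (Nrel G1 SpA)\<^sup>*\<^sup>* (rA c) (rA c')"
    and surj: "\<And>c1 c2. c1 \<in> proper_3ec G1 \<Longrightarrow> c2 \<in> proper_3ec G2 \<Longrightarrow>
                 \<exists>c \<in> proper_3ec C. (rA c, c1) \<in> kempe_equiv G1 \<and> (rB c, c2) \<in> kempe_equiv G2"
  shows "K3 C = K3 G1 * K3 G2"
proof -
  have lift1s: "\<And>h h'. (Nrel G1 SpA)\<^sup>*\<^sup>* h h' \<Longrightarrow> \<forall>c. c \<in> proper_3ec C \<and> rA c = h \<longrightarrow>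
     (\<exists>c'. (c, c') \<in> kempe_equiv C \<and> rA c' = h' \<and> rB c' = rB c)"
  proof -
    fix h h' assume "(Nrel G1 SpA)\<^sup>*\<^sup>* h h'"
    thus "\<forall>c. c \<in> proper_3ec C \<and> rA c = h \<longrightarrow> (\<exists>c'. (c, c') \<in> kempe_equiv C \<and> rA c' = h' \<and> rB c' = rB c)"
    proof (induction rule: rtranclp_induct)
      case base thus ?case using ke_refl by blast
    next
      case (step y z)
      show ?case
      proof (intro allI impI)
        fix c assume c: "c \<in> proper_3ec C \<and> rA c = h"
        obtain c' where c': "(c, c') \<in> kempe_equiv C" "rA c' = y" "rB c' = rB c" using step(3) c by blast
        have "c' \<in> proper_3ec C" using ke_proper[OF c'(1)] by blast
        then obtain c'' where c'': "(c', c'') \<in> kempe_equiv C" "rA c'' = z" "rB c'' = rB c'"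
          using lift1 step(2) c'(2) by blast
        show "\<exists>c'. (c, c') \<in> kempe_equiv C \<and> rA c' = z \<and> rB c' = rB c"
          using c' c'' ke_trans by metis
      qed
    qed
  qed
  have lift2s: "\<And>h h'. (Nrel G2 SpB)\<^sup>*\<^sup>* h h' \<Longrightarrow> \<forall>c. c \<in> proper_3ec C \<and> rB c = h \<longrightarrow>
     (\<exists>c'. (c, c') \<in> kempe_equiv C \<and> rB c' = h' \<and> rA c' = rA c)"
  proof -
    fix h h' assume "(Nrel G2 SpB)\<^sup>*\<^sup>* h h'"
    thus "\<forall>c. c \<in> proper_3ec C \<and> rB c = h \<longrightarrow> (\<exists>c'. (c, c') \<in> kempe_equiv C \<and> rB c' = h' \<and> rA c' = rA c)"
    proof (induction rule: rtranclp_induct)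
      case base thus ?case using ke_refl by blast
    next
      case (step y z)
      show ?case
      proof (intro allI impI)
        fix c assume c: "c \<in> proper_3ec C \<and> rB c = h"
        obtain c' where c': "(c, c') \<in> kempe_equiv C" "rB c' = y" "rA c' = rA c" using step(3) c by blast
        have "c' \<in> proper_3ec C" using ke_proper[OF c'(1)] by blast
        then obtain c'' where c'': "(c', c'') \<in> kempe_equiv C" "rB c'' = z" "rA c'' = rA c'"
          using lift2 step(2) c'(2) by blast
        show "\<exists>c'. (c, c') \<in> kempe_equiv C \<and> rB c' = z \<and> rA c' = rA c"
          using c' c'' ke_trans by metis
      qed
    qed
  qed
  have downs: "(rA c, rA c') \<in> kempe_equiv G1 \<and> (rB c, rB c') \<in> kempe_equiv G2"
    if "(c, c') \<in> kempe_equiv C" for c c'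
  proof -
    have c: "c \<in> proper_3ec C" and st: "(kempe_step C)\<^sup>*\<^sup>* c c'" using that unfolding kempe_equiv_def by auto
    from st show ?thesis
    proof (induction rule: rtranclp_induct)
      case base thus ?case using ke_refl[of "rA c" G1] ke_refl[of "rB c" G2] rp[OF c] by blast
    next
      case (step y z) thus ?case using down[OF step(2)] ke_trans[of "rA c" "rA y" G1 "rA z"] ke_trans[of "rB c" "rB y" G2 "rB z"] by blast
    qed
  qed
  have up: "(c, c') \<in> kempe_equiv C"
    if c: "c \<in> proper_3ec C" and c': "c' \<in> proper_3ec C"
      and k1: "(rA c, rA c') \<in> kempe_equiv G1" and k2: "(rB c, rB c') \<in> kempe_equiv G2" for c c'
  proof -
    obtain \<pi>1 where p1: "swprod \<pi>1" and N1: "(Nrel G1 SpA)\<^sup>*\<^sup>* (pm G1 \<pi>1 (rA c)) (rA c')"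
      using N_trick[OF fin(2) SpA k1] by blast
    define c0 where "c0 = pm C \<pi>1 c"
    have k0: "(c, c0) \<in> kempe_equiv C" unfolding c0_def using ke_pm[OF fin(1) c p1] .
    have c0p: "c0 \<in> proper_3ec C" using ke_proper[OF k0] by blast
    have r0: "rA c0 = pm G1 \<pi>1 (rA c)" "rB c0 = pm G2 \<pi>1 (rB c)"
      unfolding c0_def using pmc[OF swprod_perm3[OF p1] c] by auto
    obtain c1 where c1: "(c0, c1) \<in> kempe_equiv C" "rA c1 = rA c'" "rB c1 = rB c0"
      using lift1s[OF N1] c0p r0 by blast
    have c1p: "c1 \<in> proper_3ec C" using ke_proper[OF c1(1)] by blast
    have "(rB c, rB c1) \<in> kempe_equiv G2" unfolding c1(3) r0
      using ke_pm[OF fin(3) _ p1] rp[OF c] by blast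
    hence k2': "(rB c1, rB c') \<in> kempe_equiv G2" using k2 ke_sym ke_trans by metis
    obtain \<pi>2 where p2: "swprod \<pi>2" and N2: "(Nrel G2 SpB)\<^sup>*\<^sup>* (pm G2 \<pi>2 (rB c1)) (rB c')"
      using N_trick[OF fin(3) SpB k2'] by blast
    define c2 where "c2 = pm C \<pi>2 c1"
    have k3: "(c1, c2) \<in> kempe_equiv C" unfolding c2_def using ke_pm[OF fin(1) c1p p2] .
    have c2p: "c2 \<in> proper_3ec C" using ke_proper[OF k3] by blast
    have r2: "rA c2 = pm G1 \<pi>2 (rA c')" "rB c2 = pm G2 \<pi>2 (rB c1)"
      unfolding c2_def using pmc[OF swprod_perm3[OF p2] c1p] c1(2) by auto
    obtain c3 where c3: "(c2, c3) \<in> kempe_equiv C" "rB c3 = rB c'" "rA c3 = rA c2"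
      using lift2s[OF N2] c2p r2 by blast
    have c3p: "c3 \<in> proper_3ec C" using ke_proper[OF c3(1)] by blast
    have N3: "(Nrel G1 SpA)\<^sup>*\<^sup>* (rA c3) (rA c')"
      using fin2[OF c3p c' swprod_perm3[OF p2] c3(2)] c3(3) r2(1) by simp
    obtain c4 where c4: "(c3, c4) \<in> kempe_equiv C" "rA c4 = rA c'" "rB c4 = rB c3"
      using lift1s[OF N3] c3p by blast
    have "c4 = c'" using rinj[OF _ c'] ke_proper[OF c4(1)] c4 c3(2) by metis
    thus ?thesis using k0 c1(1) k3 c3(1) c4(1) ke_trans by metis
  qed
  have "card (proper_3ec C // kempe_equiv C) = card (proper_3ec G1 // kempe_equiv G1) * card (proper_3ec G2 // kempe_equiv G2)"
  proof (rule quot_prod_card[OF equiv_kempe equiv_kempe equiv_kempe])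
    show "\<And>c. c \<in> proper_3ec C \<Longrightarrow> rA c \<in> proper_3ec G1 \<and> rB c \<in> proper_3ec G2" by (rule rp)
    show "\<And>c c'. c \<in> proper_3ec C \<Longrightarrow> c' \<in> proper_3ec C \<Longrightarrow> (c, c') \<in> kempe_equiv C \<longleftrightarrow>
           (rA c, rA c') \<in> kempe_equiv G1 \<and> (rB c, rB c') \<in> kempe_equiv G2"
      using downs up by blast
    show "\<And>c1 c2. c1 \<in> proper_3ec G1 \<Longrightarrow> c2 \<in> proper_3ec G2 \<Longrightarrow>
          \<exists>c\<in>proper_3ec C. (rA c, c1) \<in> kempe_equiv G1 \<and> (rB c, c2) \<in> kempe_equiv G2" by (rule surj)
  qed
  thus ?thesis unfolding K3_def .
qed


lemma cubicD: "cubic G \<Longrightarrow> wf_mgraph G" "cubic G \<Longrightarrow> u \<in> verts G \<Longrightarrow> card (inc G u) = 3"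
  "cubic G \<Longrightarrow> finite (edges G)" "cubic G \<Longrightarrow> finite (verts G)"
  "cubic G \<Longrightarrow> e \<in> edges G \<Longrightarrow> ends G e \<subseteq> verts G"
  "cubic G \<Longrightarrow> e \<in> edges G \<Longrightarrow> card (ends G e) = 2"
  unfolding cubic_def wf_mgraph_def by auto

lemma inc_sub: "inc G u \<subseteq> edges G" unfolding inc_def by blast
lemma incD: "e \<in> inc G u \<Longrightarrow> e \<in> edges G" "e \<in> inc G u \<Longrightarrow> u \<in> ends G e" unfolding inc_def by auto
lemma inc_iff: "e \<in> inc G u \<longleftrightarrow> e \<in> edges G \<and> u \<in> ends G e" unfolding inc_def by blast

lemma even_sum: "(\<And>x. x \<in> A \<Longrightarrow> even (f x)) \<Longrightarrow> even (sum f A :: nat)"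
  by (simp add: dvd_sum)

lemma three_ones:
  fixes m n1 n2 n3 :: nat
  assumes "2 * x1 = m + n1" "2 * x2 = m + n2" "2 * x3 = m + n3" "n1 + n2 + n3 = 3"
  shows "n1 = 1 \<and> n2 = 1 \<and> n3 = 1"
proof -
  have e: "even (m+n1)" "even (m+n2)" "even (m+n3)" using assms(1-3) by (metis dvd_triv_left)+
  show ?thesis
  proof (cases "even m")
    case True
    hence "even n1" "even n2" "even n3" using e by auto
    hence "even (n1 + n2 + n3)" by auto
    thus ?thesis using assms(4) by simp
  next
    case False
    hence "odd n1" "odd n2" "odd n3" using e by auto
    hence "n1 \<ge> 1" "n2 \<ge> 1" "n3 \<ge> 1" by (auto intro: Suc_leI odd_pos)
    thus ?thesis using assms(4) by linarith
  qed
qed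

locale yside =
  fixes G :: "('v, 'e) mgraph" and C :: "('w, 'f) mgraph" and v :: 'v and \<psi> :: "'e \<Rightarrow> 'f" and emb :: "'v \<Rightarrow> 'w"
  assumes cub: "cubic G" and vV: "v \<in> verts G"
    and inj: "inj_on \<psi> (edges G)" and psiE: "\<And>e. e \<in> edges G \<Longrightarrow> \<psi> e \<in> edges C"
    and incC: "\<And>u. u \<in> verts G \<Longrightarrow> u \<noteq> v \<Longrightarrow> inc C (emb u) = \<psi> ` inc G u"
    and endsC: "\<And>e. e \<in> edges G \<Longrightarrow> e \<notin> inc G v \<Longrightarrow> ends C (\<psi> e) = emb ` ends G e"
    and finC: "finite (edges C)"
begin

definition rho :: "('f \<Rightarrow> nat) \<Rightarrow> 'e \<Rightarrow> nat" where
  "rho c = (\<lambda>e. if e \<in> edges G then c (\<psi> e) else undefined)"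

lemma rho_val: "c \<in> proper_3ec C \<Longrightarrow> e \<in> edges G \<Longrightarrow> rho c e \<in> {1,2,3}"
  unfolding rho_def using proper_val[OF _ psiE] by simp

lemma rho_inj_u: assumes c: "c \<in> proper_3ec C" and u: "u \<in> verts G" "u \<noteq> v"
  shows "inj_on (rho c) (inc G u)"
proof (rule inj_onI)
  fix e e' assume e: "e \<in> inc G u" "e' \<in> inc G u" and eq: "rho c e = rho c e'"
  have E: "e \<in> edges G" "e' \<in> edges G" using incD(1)[OF e(1)] incD(1)[OF e(2)] by auto
  have x: "\<psi> e \<in> inc C (emb u)" "\<psi> e' \<in> inc C (emb u)" using incC[OF u] e by auto
  have "\<psi> e = \<psi> e'"
  proof (rule ccontr)
    assume "\<psi> e \<noteq> \<psi> e'"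
    moreover have "ends C (\<psi> e) \<inter> ends C (\<psi> e') \<noteq> {}" using x unfolding inc_def by blast
    ultimately have "c (\<psi> e) \<noteq> c (\<psi> e')" using proper_adj[OF c psiE[OF E(1)] psiE[OF E(2)]] by blast
    thus False using eq E unfolding rho_def by simp
  qed
  thus "e = e'" using inj E unfolding inj_on_def by blast
qed

lemma rho_bij_u: assumes c: "c \<in> proper_3ec C" and u: "u \<in> verts G" "u \<noteq> v"
  shows "bij_betw (rho c) (inc G u) {1,2,3}"
proof -
  have "rho c ` inc G u \<subseteq> {1,2,3}" using rho_val[OF c] unfolding inc_def by auto
  thus ?thesis using vert_bij0[OF cubicD(2)[OF cub u(1)] rho_inj_u[OF c u]] by blast
qed

lemma rho_inj_v: assumes c: "c \<in> proper_3ec C"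
  shows "inj_on (rho c) (inc G v)"
proof -
  define F where "F i = {e \<in> edges G. rho c e = i}" for i
  define n where "n i = card (F i \<inter> inc G v)" for i
  define m where "m = card (verts G - {v})"
  have wf: "wf_mgraph G" using cubicD(1)[OF cub] .
  have par: "2 * card (F i) = m + n i" if i: "i \<in> {1,2,3}" for i
  proof -
    have "2 * card (F i) = (\<Sum>u\<in>verts G - {v}. card (inc G u \<inter> F i)) + n i"
      unfolding n_def by (rule parity_v[OF wf]) (auto simp: F_def)
    moreover have "card (inc G u \<inter> F i) = 1" if u: "u \<in> verts G - {v}" for u
    proof -
      have "inc G u \<inter> F i = {e \<in> inc G u. rho c e \<in> {i}}" unfolding F_def inc_def by auto
      moreover have "bij_betw (rho c) (inc G u) {1,2,3}" using rho_bij_u[OF c] u by blast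
      ultimately show ?thesis using bij_count[of "rho c" "inc G u" "{i}"] i by simp
    qed
    ultimately show ?thesis unfolding m_def by simp
  qed
  have fin: "finite (inc G v)" by (rule finite_subset[OF inc_sub cubicD(3)[OF cub]])
  have part: "inc G v = (F 1 \<inter> inc G v) \<union> (F 2 \<inter> inc G v) \<union> (F 3 \<inter> inc G v)"
    unfolding F_def inc_def using rho_val[OF c] by auto
  have "card (inc G v) = n 1 + n 2 + n 3" unfolding n_def
    apply (subst part)
    apply (subst card_Un_disjoint)
    using fin apply (auto simp: F_def)[3]
    apply (subst card_Un_disjoint)
    using fin apply (auto simp: F_def)
    done
  hence "n 1 + n 2 + n 3 = 3" using cubicD(2)[OF cub vV] by simp
  hence ones: "n 1 = 1 \<and> n 2 = 1 \<and> n 3 = 1" using three_ones[OF par[of 1] par[of 2] par[of 3]] by simp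
  show ?thesis
  proof (rule inj_onI)
    fix e e' assume e: "e \<in> inc G v" "e' \<in> inc G v" and eq: "rho c e = rho c e'"
    define i where "i = rho c e"
    have i: "i \<in> {1,2,3}" unfolding i_def using rho_val[OF c incD(1)[OF e(1)]] .
    have "e \<in> F i \<inter> inc G v" "e' \<in> F i \<inter> inc G v" using e eq unfolding F_def i_def inc_def by auto
    moreover have "card (F i \<inter> inc G v) = 1" using ones i unfolding n_def by auto
    ultimately show "e = e'" by (metis card_1_singletonE singletonD)
  qed
qed

lemma rho_proper: assumes c: "c \<in> proper_3ec C" shows "rho c \<in> proper_3ec G"
  unfolding proper_def2
proof (intro conjI allI ballI impI)
  fix e assume "e \<notin> edges G" thus "rho c e = undefined" unfolding rho_def by simp
next
  fix e assume "e \<in> edges G" thus "rho c e \<in> {1,2,3}" using rho_val[OF c] by blast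
next
  fix e e' assume E: "e \<in> edges G" "e' \<in> edges G" and ee: "e \<noteq> e' \<and> ends G e \<inter> ends G e' \<noteq> {}"
  then obtain u where u: "u \<in> ends G e" "u \<in> ends G e'" by blast
  have uV: "u \<in> verts G" using cubicD(5)[OF cub E(1)] u by blast
  have ei: "e \<in> inc G u" "e' \<in> inc G u" using E u unfolding inc_def by auto
  have "inj_on (rho c) (inc G u)" using rho_inj_v[OF c] rho_inj_u[OF c uV] by (cases "u = v") auto
  thus "rho c e \<noteq> rho c e'" using ei ee unfolding inj_on_def by blast
qed

lemma rho_bij: "c \<in> proper_3ec C \<Longrightarrow> u \<in> verts G \<Longrightarrow> bij_betw (rho c) (inc G u) {1,2,3}"
  using proper_bij_inc[OF rho_proper cubicD(2)[OF cub]] by blast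

lemma rho_switch: "rho (kempe_switch c a b K) = kempe_switch (rho c) a b {e \<in> edges G. \<psi> e \<in> K}"
  unfolding rho_def kempe_switch_sw by (intro ext) auto

lemma down: assumes st: "kempe_step C c c'" shows "(rho c, rho c') \<in> kempe_equiv G"
proof -
  have c: "c \<in> proper_3ec C" and ex: "\<exists>a b K. a \<in> {1,2,3} \<and> b \<in> {1,2,3} \<and> a \<noteq> b \<and> kempe_chain C c a b K \<and>
        c' = kempe_switch c a b K" using st unfolding kempe_step_def by simp_all
  from ex obtain a b K where ab: "a \<in> {1,2,3}" "b \<in> {1,2,3}" "a \<noteq> b"
    and K: "kempe_chain C c a b K" and c': "c' = kempe_switch c a b K" by blast
  have cl: "closed C c a b K" using chain_closed[OF K] .
  define S where "S = {e \<in> edges G. \<psi> e \<in> K}"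
  define h where "h = rho c"
  have hp: "h \<in> proper_3ec G" unfolding h_def using rho_proper[OF c] .
  have Sab: "S \<subseteq> {e \<in> edges G. h e \<in> {a,b}}"
    unfolding S_def h_def rho_def using closed_sub[OF cl] by auto
  have ev: "even (card (inc G u \<inter> S))" if u: "u \<in> verts G - {v}" for u
  proof -
    have uV: "u \<in> verts G" "u \<noteq> v" using u by auto
    have "inc C (emb u) \<inter> K = \<psi> ` inc G u \<inter> K" using incC[OF uV] by simp
    also have "\<dots> = \<psi> ` (inc G u \<inter> S)" unfolding S_def inc_def by blast
    finally have img: "\<psi> ` (inc G u \<inter> S) = inc C (emb u) \<inter> K" by simp
    have ij: "inj_on \<psi> (inc G u)" using inj_on_subset[OF inj inc_sub] .
    have i3: "card (inc C (emb u)) = 3" unfolding incC[OF uV] card_image[OF ij] using cubicD(2)[OF cub uV(1)] .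
    have "card (inc G u \<inter> S) = card (inc C (emb u) \<inter> K)" unfolding img[symmetric]
      using card_image[OF inj_on_subset[OF ij]] by (metis inf.cobounded1)
    moreover have "inc C (emb u) \<inter> K = {} \<or> card (inc C (emb u) \<inter> K) = 2"
      using closed_vertex[OF c cl ab i3] card_ab[OF proper_bij_inc[OF c i3] ab] by auto
    ultimately show ?thesis by auto
  qed
  have SE: "S \<subseteq> edges G" unfolding S_def by blast
  have "2 * card S = (\<Sum>u\<in>verts G - {v}. card (inc G u \<inter> S)) + card (S \<inter> inc G v)"
    using parity_v[OF cubicD(1)[OF cub] SE] .
  hence e1: "even ((\<Sum>u\<in>verts G - {v}. card (inc G u \<inter> S)) + card (S \<inter> inc G v))"
    by (metis dvd_triv_left)
  have e2: "even (\<Sum>u\<in>verts G - {v}. card (inc G u \<inter> S))" by (rule even_sum) (rule ev)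
  have evv: "even (card (S \<inter> inc G v))" using e1 dvd_add_right_iff[OF e2] by blast
  define ABv where "ABv = {e \<in> inc G v. h e \<in> {a,b}}"
  have cABv: "card ABv = 2" unfolding ABv_def h_def using card_ab[OF rho_bij[OF c vV] ab] .
  have finv: "finite ABv" by (rule ccontr) (use cABv in simp)
  have SABv: "S \<inter> inc G v \<subseteq> ABv" using Sab unfolding ABv_def by blast
  have clS: "closed G h a b S" unfolding closed_def
  proof (intro conjI allI impI)
    show "S \<subseteq> {e \<in> edges G. h e \<in> {a, b}}" by (rule Sab)
    fix e e' assume eS: "e \<in> S" and adj: "ab_adj G h a b e e'"
    have E: "e \<in> edges G" "e' \<in> edges G" "h e \<in> {a,b}" "h e' \<in> {a,b}" and sh: "ends G e \<inter> ends G e' \<noteq> {}"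
      using adj unfolding ab_adj_def by auto
    show "e' \<in> S"
    proof (cases "\<exists>u \<in> ends G e \<inter> ends G e'. u \<noteq> v")
      case True
      then obtain u where u: "u \<in> ends G e" "u \<in> ends G e'" "u \<noteq> v" by blast
      have uV: "u \<in> verts G" using cubicD(5)[OF cub E(1)] u by blast
      have x: "\<psi> e \<in> inc C (emb u)" "\<psi> e' \<in> inc C (emb u)" using incC[OF uV u(3)] u E unfolding inc_def by auto
      have "ab_adj C c a b (\<psi> e) (\<psi> e')" unfolding ab_adj_def using x E unfolding inc_def h_def rho_def by auto
      hence "\<psi> e' \<in> K" using cl eS unfolding closed_def S_def by blast
      thus ?thesis unfolding S_def using E by blast
    next
      case False
      obtain u0 where "u0 \<in> ends G e \<inter> ends G e'" using sh by blast
      hence "v \<in> ends G e \<inter> ends G e'" using False by metis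
      hence "v \<in> ends G e" "v \<in> ends G e'" by simp_all
      hence ev': "e \<in> ABv" "e' \<in> ABv" using E unfolding ABv_def inc_def by auto
      have "e \<in> S \<inter> inc G v" using eS \<open>v \<in> ends G e\<close> E unfolding inc_def by blast
      hence "card (S \<inter> inc G v) \<noteq> 0" using finite_subset[OF SABv finv] by auto
      moreover have "card (S \<inter> inc G v) \<le> 2" using card_mono[OF finv SABv] cABv by simp
      ultimately have "card (S \<inter> inc G v) = 2" using evv by (metis One_nat_def dvd_refl le_antisym not_less_eq_eq odd_one numeral_2_eq_2 le_0_eq less_Suc_eq_le)
      hence "S \<inter> inc G v = ABv" using card_subset_eq[OF finv SABv] cABv by simp
      thus ?thesis using ev' by blast
    qed
  qed
  have "rho c' = kempe_switch h a b S" unfolding c' h_def S_def by (rule rho_switch)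
  thus ?thesis unfolding h_def[symmetric] using closed_switch_equiv[OF cubicD(3)[OF cub] hp clS ab] by simp
qed

lemma lift: assumes c: "c \<in> proper_3ec C" and cl: "closed G (rho c) a b S" and Sv: "S \<inter> inc G v = {}"
  shows "closed C c a b (\<psi> ` S) \<and> rho (kempe_switch c a b (\<psi> ` S)) = kempe_switch (rho c) a b S"
proof
  have SE: "S \<subseteq> edges G" using cl unfolding closed_def by blast
  have "{e \<in> edges G. \<psi> e \<in> \<psi> ` S} = S" using SE inj unfolding inj_on_def by blast
  thus "rho (kempe_switch c a b (\<psi> ` S)) = kempe_switch (rho c) a b S" using rho_switch by metis
  show "closed C c a b (\<psi> ` S)" unfolding closed_def
  proof (intro conjI allI impI)
    show "\<psi> ` S \<subseteq> {e \<in> edges C. c e \<in> {a, b}}"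
    proof
      fix x assume "x \<in> \<psi> ` S"
      then obtain e where e: "e \<in> S" "x = \<psi> e" by blast
      have "e \<in> edges G" "rho c e \<in> {a,b}" using closed_sub[OF cl e(1)] by auto
      thus "x \<in> {e \<in> edges C. c e \<in> {a, b}}" using e psiE unfolding rho_def by auto
    qed
    fix x x' assume xS: "x \<in> \<psi> ` S" and adj: "ab_adj C c a b x x'"
    then obtain e where e: "e \<in> S" "x = \<psi> e" by blast
    have eE: "e \<in> edges G" "e \<notin> inc G v" using e SE Sv by auto
    obtain w where w: "w \<in> ends C x" "w \<in> ends C x'" using adj unfolding ab_adj_def by blast
    then obtain u where u: "u \<in> ends G e" "w = emb u" using endsC[OF eE] e by blast
    have uV: "u \<in> verts G" "u \<noteq> v" using cubicD(5)[OF cub eE(1)] u eE unfolding inc_def by auto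
    have "x' \<in> inc C (emb u)" using adj w u unfolding ab_adj_def inc_def by blast
    then obtain e' where e': "e' \<in> inc G u" "x' = \<psi> e'" using incC[OF uV] by blast
    have "ab_adj G (rho c) a b e e'" unfolding ab_adj_def rho_def
      using e' eE u adj e inc_sub unfolding ab_adj_def inc_def by auto
    hence "e' \<in> S" using cl e unfolding closed_def by blast
    thus "x' \<in> \<psi> ` S" using e' by blast
  qed
qed

end


lemma sum_two_ind:
  assumes "finite V" "x \<in> V" "y \<in> V" "x \<noteq> y"
  shows "(\<Sum>u\<in>V. if u \<in> {x, y} \<and> P u then 1 else 0) = (if P x then 1 else 0) + (if P y then (1::nat) else 0)"
proof -
  have "(\<Sum>u\<in>V. if u \<in> {x, y} \<and> P u then 1 else 0) = (\<Sum>u\<in>{x,y}. if u \<in> {x, y} \<and> P u then (1::nat) else 0)"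
    by (rule sum.mono_neutral_right) (use assms in auto)
  thus ?thesis using assms(4) by simp
qed

lemma cubic_even_verts: assumes "cubic G" shows "even (card (verts G))"
proof -
  have "2 * card (edges G) = (\<Sum>u\<in>verts G. card (inc G u \<inter> edges G))"
    by (rule parity_all[OF cubicD(1)[OF assms]]) simp
  also have "\<dots> = (\<Sum>u\<in>verts G. 3)"
  proof (rule sum.cong[OF refl])
    fix u assume "u \<in> verts G"
    have "inc G u \<inter> edges G = inc G u" unfolding inc_def by blast
    thus "card (inc G u \<inter> edges G) = 3" using cubicD(2)[OF assms \<open>u \<in> verts G\<close>] by simp
  qed
  finally have "2 * card (edges G) = 3 * card (verts G)" by simp
  thus ?thesis by presburger
qed

locale hside =
  fixes G :: "('v, 'e) mgraph" and C :: "('w, 'f) mgraph" and d :: 'e and x :: 'v and y :: 'v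
    and \<psi> :: "'e \<Rightarrow> 'f" and \<kappa> :: "'v \<Rightarrow> 'f" and emb :: "'v \<Rightarrow> 'w"
  assumes cub: "cubic G" and dE: "d \<in> edges G" and dxy: "ends G d = {x, y}" and xy: "x \<noteq> y"
    and inj: "inj_on \<psi> (edges G - {d})" and psiE: "\<And>e. e \<in> edges G - {d} \<Longrightarrow> \<psi> e \<in> edges C"
    and kapE: "\<And>u. u \<in> ends G d \<Longrightarrow> \<kappa> u \<in> edges C"
    and kap_psi: "\<And>e u. e \<in> edges G - {d} \<Longrightarrow> \<psi> e \<noteq> \<kappa> u"
    and kxy: "\<kappa> x \<noteq> \<kappa> y"
    and incC: "\<And>u. u \<in> verts G \<Longrightarrow> inc C (emb u) = \<psi> ` (inc G u - {d}) \<union> (if u \<in> ends G d then {\<kappa> u} else {})"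
    and endsC: "\<And>e. e \<in> edges G - {d} \<Longrightarrow> ends C (\<psi> e) = emb ` ends G e"
    and finC: "finite (edges C)"
begin

definition lam :: "'v \<Rightarrow> 'e \<Rightarrow> 'f" where "lam u e = (if e = d then \<kappa> u else \<psi> e)"

definition rho :: "('f \<Rightarrow> nat) \<Rightarrow> 'e \<Rightarrow> nat" where
  "rho c = (\<lambda>e. if e = d then c (\<kappa> x) else if e \<in> edges G then c (\<psi> e) else undefined)"

lemma xyV: "x \<in> verts G" "y \<in> verts G" using cubicD(5)[OF cub dE] dxy by auto

lemma incC': "u \<in> verts G \<Longrightarrow> inc C (emb u) = lam u ` inc G u"
proof -
  assume u: "u \<in> verts G"
  have "lam u ` inc G u = \<psi> ` (inc G u - {d}) \<union> (if u \<in> ends G d then {\<kappa> u} else {})"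
  proof (cases "u \<in> ends G d")
    case True
    hence "d \<in> inc G u" using dE unfolding inc_def by blast
    hence "inc G u = insert d (inc G u - {d})" by blast
    hence "lam u ` inc G u = insert (\<kappa> u) (lam u ` (inc G u - {d}))" by (metis image_insert lam_def)
    moreover have "lam u ` (inc G u - {d}) = \<psi> ` (inc G u - {d})" unfolding lam_def by auto
    ultimately show ?thesis using True by simp
  next
    case False
    hence "d \<notin> inc G u" unfolding inc_def by blast
    hence "lam u ` inc G u = \<psi> ` (inc G u - {d})" unfolding lam_def by force
    thus ?thesis using False by simp
  qed
  thus ?thesis using incC[OF u] by simp
qed

lemma lam_inj: "inj_on (lam u) (inc G u)"
proof (rule inj_onI)
  fix e e' assume e: "e \<in> inc G u" "e' \<in> inc G u" and eq: "lam u e = lam u e'"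
  have E: "e \<in> edges G" "e' \<in> edges G" using incD(1)[OF e(1)] incD(1)[OF e(2)] .
  show "e = e'"
  proof (cases "e = d")
    case True
    show ?thesis
    proof (rule ccontr)
      assume "e \<noteq> e'"
      hence "e' \<in> edges G - {d}" using True E by blast
      hence "\<psi> e' \<noteq> \<kappa> u" by (rule kap_psi)
      moreover have "lam u e' = \<psi> e'" using \<open>e \<noteq> e'\<close> True unfolding lam_def by auto
      ultimately show False using eq True unfolding lam_def by simp
    qed
  next
    case False
    show ?thesis
    proof (cases "e' = d")
      case True
      have "e \<in> edges G - {d}" using False E by blast
      hence "\<psi> e \<noteq> \<kappa> u" by (rule kap_psi)
      thus ?thesis using eq True False unfolding lam_def by simp
    next
      case F2: False
      have "\<psi> e = \<psi> e'" using eq False F2 unfolding lam_def by simp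
      thus ?thesis using inj E False F2 unfolding inj_on_def by blast
    qed
  qed
qed

lemma card3: assumes u: "u \<in> verts G" shows "card (inc C (emb u)) = 3"
proof -
  have "card (inc C (emb u)) = card (inc G u)" unfolding incC'[OF u] by (rule card_image[OF lam_inj])
  thus ?thesis using cubicD(2)[OF cub u] by simp
qed

lemma H_count:
  "(\<Sum>u\<in>verts G. card (inc C (emb u) \<inter> K)) =
     2 * card {e \<in> edges G - {d}. \<psi> e \<in> K} + (if \<kappa> x \<in> K then 1 else 0) + (if \<kappa> y \<in> K then 1 else 0)"
proof -
  define S0 where "S0 = {e \<in> edges G - {d}. \<psi> e \<in> K}"
  have fV: "finite (verts G)" using cubicD(4)[OF cub] .
  have one: "card (inc C (emb u) \<inter> K) = card (inc G u \<inter> S0) + (if u \<in> {x,y} \<and> \<kappa> u \<in> K then 1 else 0)"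
    if u: "u \<in> verts G" for u
  proof -
    have "inc C (emb u) \<inter> K = lam u ` (inc G u \<inter> {e. lam u e \<in> K})" unfolding incC'[OF u] by blast
    hence c1: "card (inc C (emb u) \<inter> K) = card (inc G u \<inter> {e. lam u e \<in> K})"
      using card_image[OF inj_on_subset[OF lam_inj]] by (metis inf.cobounded1)
    have sp: "inc G u \<inter> {e. lam u e \<in> K} = (inc G u \<inter> S0) \<union> (if u \<in> {x,y} \<and> \<kappa> u \<in> K then {d} else {})"
    proof (rule set_eqI)
      fix e show "e \<in> inc G u \<inter> {e. lam u e \<in> K} \<longleftrightarrow> e \<in> (inc G u \<inter> S0) \<union> (if u \<in> {x,y} \<and> \<kappa> u \<in> K then {d} else {})"
      proof (cases "e = d")
        case True
        have "d \<in> inc G u \<longleftrightarrow> u \<in> {x,y}" using dE dxy unfolding inc_def by simp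
        thus ?thesis using True unfolding S0_def lam_def by simp
      next
        case False
        thus ?thesis unfolding S0_def lam_def inc_def by auto
      qed
    qed
    have "inc G u \<inter> S0 \<subseteq> edges G" unfolding inc_def by blast
    hence fin: "finite (inc G u \<inter> S0)" using finite_subset cubicD(3)[OF cub] by auto
    have "d \<notin> inc G u \<inter> S0" unfolding S0_def by blast
    thus ?thesis unfolding c1 sp using fin by (auto simp: card_insert_if)
  qed
  have S0E: "S0 \<subseteq> edges G" unfolding S0_def by blast
  have "(\<Sum>u\<in>verts G. card (inc C (emb u) \<inter> K)) =
     (\<Sum>u\<in>verts G. card (inc G u \<inter> S0)) + (\<Sum>u\<in>verts G. if u \<in> {x,y} \<and> \<kappa> u \<in> K then 1 else 0)"
    unfolding sum.distrib[symmetric] using one by (rule sum.cong[OF refl])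
  also have "(\<Sum>u\<in>verts G. card (inc G u \<inter> S0)) = 2 * card S0"
    using parity_all[OF cubicD(1)[OF cub] S0E] by simp
  also have "(\<Sum>u\<in>verts G. if u \<in> {x,y} \<and> \<kappa> u \<in> K then 1 else 0) = (if \<kappa> x \<in> K then 1 else 0) + (if \<kappa> y \<in> K then 1 else (0::nat))"
  proof -
    have "(\<Sum>u\<in>verts G. if u \<in> {x,y} \<and> \<kappa> u \<in> K then 1 else (0::nat)) = (\<Sum>u\<in>{x,y}. if u \<in> {x,y} \<and> \<kappa> u \<in> K then 1 else (0::nat))"
      by (rule sum.mono_neutral_right) (use fV xyV in auto)
    also have "\<dots> = (if \<kappa> x \<in> K then 1 else 0) + (if \<kappa> y \<in> K then 1 else 0)" using xy by simp
    finally show ?thesis .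
  qed
  finally show ?thesis unfolding S0_def by simp
qed

lemma kap_eq: assumes c: "c \<in> proper_3ec C" shows "c (\<kappa> y) = c (\<kappa> x)"
proof (rule ccontr)
  assume ne: "c (\<kappa> y) \<noteq> c (\<kappa> x)"
  define K where "K = {z. c z = c (\<kappa> x)}"
  have "card (inc C (emb u) \<inter> K) = 1" if u: "u \<in> verts G" for u
  proof -
    have b: "bij_betw c (inc C (emb u)) {1,2,3}" using proper_bij_inc[OF c card3[OF u]] .
    have xE: "c (\<kappa> x) \<in> {1,2,3}" using proper_val[OF c kapE] dxy by blast
    have "inc C (emb u) \<inter> K = {z \<in> inc C (emb u). c z \<in> {c (\<kappa> x)}}" unfolding K_def by auto
    thus ?thesis using bij_count[OF b, of "{c (\<kappa> x)}"] xE by simp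
  qed
  hence "(\<Sum>u\<in>verts G. card (inc C (emb u) \<inter> K)) = card (verts G)" by simp
  hence "card (verts G) = 2 * card {e \<in> edges G - {d}. \<psi> e \<in> K} + 1"
    using H_count[of K] ne unfolding K_def by simp
  thus False using cubic_even_verts[OF cub] by presburger
qed

lemma rho_lam: assumes c: "c \<in> proper_3ec C" and e: "e \<in> inc G u" shows "rho c e = c (lam u e)"
proof (cases "e = d")
  case True
  hence "u \<in> {x, y}" using e dxy unfolding inc_def by blast
  thus ?thesis using True kap_eq[OF c] unfolding rho_def lam_def by auto
next
  case False thus ?thesis using incD(1)[OF e] unfolding rho_def lam_def by simp
qed

lemma rho_proper: assumes c: "c \<in> proper_3ec C" shows "rho c \<in> proper_3ec G"
  unfolding proper_def2
proof (intro conjI allI ballI impI)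
  fix e assume "e \<notin> edges G" thus "rho c e = undefined" unfolding rho_def using dE by auto
next
  fix e assume e: "e \<in> edges G"
  show "rho c e \<in> {1,2,3}"
  proof (cases "e = d")
    case True thus ?thesis unfolding rho_def using proper_val[OF c kapE] dxy by simp
  next
    case False thus ?thesis unfolding rho_def using proper_val[OF c psiE] e by simp
  qed
next
  fix e e' assume E: "e \<in> edges G" "e' \<in> edges G" and ee: "e \<noteq> e' \<and> ends G e \<inter> ends G e' \<noteq> {}"
  then obtain u where u: "u \<in> ends G e" "u \<in> ends G e'" by blast
  have uV: "u \<in> verts G" using cubicD(5)[OF cub E(1)] u by blast
  have ei: "e \<in> inc G u" "e' \<in> inc G u" using E u unfolding inc_def by auto
  have ne: "lam u e \<noteq> lam u e'" using lam_inj ei ee unfolding inj_on_def by blast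
  have x: "lam u e \<in> inc C (emb u)" "lam u e' \<in> inc C (emb u)" using incC'[OF uV] ei by auto
  have "c (lam u e) \<noteq> c (lam u e')"
    using proper_adj[OF c incD(1)[OF x(1)] incD(1)[OF x(2)] ne] incD(2)[OF x(1)] incD(2)[OF x(2)] by blast
  thus "rho c e \<noteq> rho c e'" using rho_lam[OF c ei(1)] rho_lam[OF c ei(2)] by simp
qed

lemma rho_switch: assumes K: "\<kappa> x \<in> K \<longleftrightarrow> \<kappa> y \<in> K"
  shows "rho (kempe_switch c a b K) = kempe_switch (rho c) a b
      ({e \<in> edges G - {d}. \<psi> e \<in> K} \<union> (if \<kappa> x \<in> K then {d} else {}))"
proof
  fix e
  show "rho (kempe_switch c a b K) e = kempe_switch (rho c) a b
      ({e \<in> edges G - {d}. \<psi> e \<in> K} \<union> (if \<kappa> x \<in> K then {d} else {})) e"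
  proof (cases "e = d")
    case True thus ?thesis unfolding rho_def kempe_switch_sw by simp
  next
    case False
    hence "e \<in> ({e \<in> edges G - {d}. \<psi> e \<in> K} \<union> (if \<kappa> x \<in> K then {d} else {})) \<longleftrightarrow> e \<in> edges G \<and> \<psi> e \<in> K"
      by simp
    thus ?thesis using False unfolding rho_def kempe_switch_sw by simp
  qed
qed

lemma down: assumes st: "kempe_step C c c'" shows "(rho c, rho c') \<in> kempe_equiv G"
proof -
  have c: "c \<in> proper_3ec C" and ex: "\<exists>a b K. a \<in> {1,2,3} \<and> b \<in> {1,2,3} \<and> a \<noteq> b \<and> kempe_chain C c a b K \<and>
        c' = kempe_switch c a b K" using st unfolding kempe_step_def by simp_all
  from ex obtain a b K where ab: "a \<in> {1,2,3}" "b \<in> {1,2,3}" "a \<noteq> b"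
    and K: "kempe_chain C c a b K" and c': "c' = kempe_switch c a b K" by blast
  have cl: "closed C c a b K" using chain_closed[OF K] .
  have ev: "even (card (inc C (emb u) \<inter> K))" if u: "u \<in> verts G" for u
  proof -
    have "inc C (emb u) \<inter> K = {} \<or> card (inc C (emb u) \<inter> K) = 2"
      using closed_vertex[OF c cl ab card3[OF u]] card_ab[OF proper_bij_inc[OF c card3[OF u]] ab] by auto
    thus ?thesis by auto
  qed
  have "even (\<Sum>u\<in>verts G. card (inc C (emb u) \<inter> K))" by (rule even_sum) (rule ev)
  hence "even ((if \<kappa> x \<in> K then 1 else 0) + (if \<kappa> y \<in> K then 1 else (0::nat)))"
    unfolding H_count[of K] by simp
  hence KK: "\<kappa> x \<in> K \<longleftrightarrow> \<kappa> y \<in> K" by (auto split: if_splits)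
  define S where "S = {e \<in> edges G - {d}. \<psi> e \<in> K} \<union> (if \<kappa> x \<in> K then {d} else {})"
  define h where "h = rho c"
  have hp: "h \<in> proper_3ec G" unfolding h_def using rho_proper[OF c] .
  have Slam: "e \<in> S \<longleftrightarrow> lam u e \<in> K" if e: "e \<in> inc G u" for e u
  proof (cases "e = d")
    case True
    hence "u \<in> {x, y}" using e dxy unfolding inc_def by blast
    thus ?thesis using True KK unfolding S_def lam_def by auto
  next
    case False thus ?thesis using incD(1)[OF e] unfolding S_def lam_def by auto
  qed
  have clS: "closed G h a b S" unfolding closed_def
  proof (intro conjI allI impI)
    show "S \<subseteq> {e \<in> edges G. h e \<in> {a, b}}"
    proof
      fix e assume eS: "e \<in> S"
      have eE: "e \<in> edges G" using eS dE unfolding S_def by (auto split: if_splits)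
      have "ends G e \<noteq> {}" using cubicD(6)[OF cub eE] by (metis card.empty zero_neq_numeral)
      then obtain u where u: "u \<in> ends G e" by blast
      have ei: "e \<in> inc G u" using eE u unfolding inc_def by blast
      have "lam u e \<in> K" using Slam[OF ei] eS by blast
      hence "c (lam u e) \<in> {a,b}" using closed_sub[OF cl] by blast
      thus "e \<in> {e \<in> edges G. h e \<in> {a, b}}" using eE rho_lam[OF c ei] unfolding h_def by simp
    qed
    fix e e' assume eS: "e \<in> S" and adj: "ab_adj G h a b e e'"
    have E: "e \<in> edges G" "e' \<in> edges G" "h e' \<in> {a,b}" and sh: "ends G e \<inter> ends G e' \<noteq> {}"
      using adj unfolding ab_adj_def by auto
    then obtain u where u: "u \<in> ends G e" "u \<in> ends G e'" by blast
    have uV: "u \<in> verts G" using cubicD(5)[OF cub E(1)] u by blast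
    have ei: "e \<in> inc G u" "e' \<in> inc G u" using E u unfolding inc_def by auto
    have x: "lam u e \<in> inc C (emb u)" "lam u e' \<in> inc C (emb u)" using incC'[OF uV] ei by auto
    have "c (lam u e') \<in> {a,b}" using E(3) rho_lam[OF c ei(2)] unfolding h_def by simp
    moreover have "c (lam u e) \<in> {a,b}" using closed_sub[OF cl] Slam[OF ei(1)] eS by blast
    ultimately have "ab_adj C c a b (lam u e) (lam u e')" using x unfolding ab_adj_def inc_def by auto
    hence "lam u e' \<in> K" using cl Slam[OF ei(1)] eS unfolding closed_def by blast
    thus "e' \<in> S" using Slam[OF ei(2)] by blast
  qed
  have "rho c' = kempe_switch h a b S" unfolding c' h_def S_def by (rule rho_switch[OF KK])
  thus ?thesis unfolding h_def[symmetric] using closed_switch_equiv[OF cubicD(3)[OF cub] hp clS ab] by simp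
qed

lemma lift: assumes c: "c \<in> proper_3ec C" and cl: "closed G (rho c) a b S" and Sd: "d \<notin> S"
  shows "closed C c a b (\<psi> ` S) \<and> rho (kempe_switch c a b (\<psi> ` S)) = kempe_switch (rho c) a b S"
proof
  have SE: "S \<subseteq> edges G - {d}" using cl Sd unfolding closed_def by blast
  show "rho (kempe_switch c a b (\<psi> ` S)) = kempe_switch (rho c) a b S"
  proof
    fix e show "rho (kempe_switch c a b (\<psi> ` S)) e = kempe_switch (rho c) a b S e"
    proof (cases "e = d")
      case True
      have "\<kappa> x \<notin> \<psi> ` S"
      proof
        assume "\<kappa> x \<in> \<psi> ` S"
        then obtain e' where "e' \<in> S" "\<kappa> x = \<psi> e'" by blast
        thus False using kap_psi[of e' x] SE by auto
      qed
      thus ?thesis using True Sd unfolding rho_def kempe_switch_sw by simp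
    next
      case False
      show ?thesis
      proof (cases "e \<in> edges G")
        case True
        have "\<psi> e \<in> \<psi> ` S \<longleftrightarrow> e \<in> S" using inj SE True False unfolding inj_on_def by blast
        thus ?thesis using True False unfolding rho_def kempe_switch_sw by simp
      next
        case F2: False
        hence "e \<notin> S" using SE by blast
        thus ?thesis using F2 False unfolding rho_def kempe_switch_sw by simp
      qed
    qed
  qed
  show "closed C c a b (\<psi> ` S)" unfolding closed_def
  proof (intro conjI allI impI)
    show "\<psi> ` S \<subseteq> {e \<in> edges C. c e \<in> {a, b}}"
    proof
      fix z assume "z \<in> \<psi> ` S"
      then obtain e where e: "e \<in> S" "z = \<psi> e" by blast
      have "e \<in> edges G - {d}" "rho c e \<in> {a,b}" using closed_sub[OF cl e(1)] SE e(1) by auto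
      thus "z \<in> {e \<in> edges C. c e \<in> {a, b}}" using e psiE unfolding rho_def by auto
    qed
    fix z z' assume zS: "z \<in> \<psi> ` S" and adj: "ab_adj C c a b z z'"
    then obtain e where e: "e \<in> S" "z = \<psi> e" by blast
    have eE: "e \<in> edges G - {d}" using e SE by auto
    obtain w where w: "w \<in> ends C z" "w \<in> ends C z'" using adj unfolding ab_adj_def by blast
    then obtain u where u: "u \<in> ends G e" "w = emb u" using endsC[OF eE] e by blast
    have uV: "u \<in> verts G" using cubicD(5)[OF cub, of e] eE u by blast
    have "z' \<in> inc C (emb u)" using adj w u unfolding ab_adj_def inc_def by blast
    then obtain e' where e': "e' \<in> inc G u" "z' = lam u e'" using incC'[OF uV] by blast
    have ei: "e \<in> inc G u" using eE u unfolding inc_def by blast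
    have "rho c e' \<in> {a,b}" using rho_lam[OF c e'(1)] e' adj unfolding ab_adj_def by simp
    moreover have "rho c e \<in> {a,b}" "e \<in> edges G" using closed_sub[OF cl e(1)] by auto
    moreover have "e' \<in> edges G" "u \<in> ends G e'" using incD[OF e'(1)] by auto
    ultimately have "ab_adj G (rho c) a b e e'" unfolding ab_adj_def using u(1) by blast
    hence "e' \<in> S" using cl e unfolding closed_def by blast
    hence "e' \<noteq> d" using Sd by blast
    thus "z' \<in> \<psi> ` S" using e' \<open>e' \<in> S\<close> unfolding lam_def by simp
  qed
qed

end


lemma proper_local:
  assumes "\<And>z. z \<notin> edges C \<Longrightarrow> c z = undefined" "\<And>z. z \<in> edges C \<Longrightarrow> c z \<in> {1,2,3}"
    "\<And>w. inj_on c (inc C w)"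
  shows "c \<in> proper_3ec C"
  unfolding proper_def2
proof (intro conjI allI ballI impI)
  fix z z' assume z: "z \<in> edges C" "z' \<in> edges C" and zz: "z \<noteq> z' \<and> ends C z \<inter> ends C z' \<noteq> {}"
  then obtain w where "w \<in> ends C z" "w \<in> ends C z'" by blast
  hence "z \<in> inc C w" "z' \<in> inc C w" using z unfolding inc_def by auto
  thus "c z \<noteq> c z'" using assms(3)[of w] zz unfolding inj_on_def by blast
qed (use assms in auto)

lemma other_end:
  assumes wf: "wf_mgraph G" and e: "e \<in> inc G v"
  shows "ends G e = {v, other_end G e v}" "other_end G e v \<noteq> v"
proof -
  have E: "e \<in> edges G" "v \<in> ends G e" using e unfolding inc_def by auto
  have c2: "card (ends G e) = 2" using wf E unfolding wf_mgraph_def by auto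
  have fin: "finite (ends G e)" using c2 card.infinite by fastforce
  have "card (ends G e - {v}) = 1" using c2 E(2) fin by (simp add: card_Diff_singleton)
  then obtain w where w: "ends G e - {v} = {w}" by (metis card_1_singletonE)
  hence oe: "other_end G e v = w" unfolding other_end_def by simp
  show "ends G e = {v, other_end G e v}" using w E(2) oe by blast
  show "other_end G e v \<noteq> v" using w oe by blast
qed

context yside
begin

lemma rho_pm: "rho (pm C \<pi> c) = pm G \<pi> (rho c)"
  unfolding rho_def pm_def using psiE by (intro ext) auto

lemma rho_disj: "(\<And>e. e \<in> edges G \<Longrightarrow> \<psi> e \<notin> T) \<Longrightarrow> rho (kempe_switch c a b T) = rho c"
  unfolding rho_def kempe_switch_sw by (intro ext) auto

lemma rho_eq: assumes "c1 \<in> proper_3ec G" "\<And>e. e \<in> edges G \<Longrightarrow> c (\<psi> e) = c1 e" shows "rho c = c1"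
proof
  fix e show "rho c e = c1 e" unfolding rho_def using assms(2)[of e] proper_out[OF assms(1), of e] by auto
qed

lemma inj_local: assumes c1: "c1 \<in> proper_3ec G" and eq: "\<And>e. e \<in> edges G \<Longrightarrow> c (\<psi> e) = c1 e"
  and u: "u \<in> verts G" "u \<noteq> v"
  shows "inj_on c (inc C (emb u))"
proof -
  have "inj_on (c \<circ> \<psi>) (inc G u)"
  proof (rule inj_onI)
    fix e e' assume e: "e \<in> inc G u" "e' \<in> inc G u" and "(c \<circ> \<psi>) e = (c \<circ> \<psi>) e'"
    hence "c1 e = c1 e'" using eq incD(1)[OF e(1)] incD(1)[OF e(2)] by simp
    thus "e = e'" using proper_inj_inc[OF c1] e unfolding inj_on_def by blast
  qed
  thus ?thesis unfolding incC[OF u] by (rule inj_on_imageI)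
qed

end

context hside
begin

lemma rho_pm: "rho (pm C \<pi> c) = pm G \<pi> (rho c)"
  unfolding rho_def pm_def using psiE kapE dxy dE by (intro ext) auto

lemma rho_disj: "(\<And>e. e \<in> edges G - {d} \<Longrightarrow> \<psi> e \<notin> T) \<Longrightarrow> \<kappa> x \<notin> T \<Longrightarrow> rho (kempe_switch c a b T) = rho c"
  unfolding rho_def kempe_switch_sw by (intro ext) auto

lemma rho_eq: assumes "c1 \<in> proper_3ec G" "c (\<kappa> x) = c1 d" "\<And>e. e \<in> edges G - {d} \<Longrightarrow> c (\<psi> e) = c1 e"
  shows "rho c = c1"
proof
  fix e show "rho c e = c1 e" unfolding rho_def using assms(2) assms(3)[of e] proper_out[OF assms(1), of e] dE by auto
qed

lemma inj_local: assumes c1: "c1 \<in> proper_3ec G" and eq: "\<And>e. e \<in> inc G u \<Longrightarrow> c (lam u e) = c1 e"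
  and u: "u \<in> verts G"
  shows "inj_on c (inc C (emb u))"
proof -
  have "inj_on (c \<circ> lam u) (inc G u)"
  proof (rule inj_onI)
    fix e e' assume e: "e \<in> inc G u" "e' \<in> inc G u" and "(c \<circ> lam u) e = (c \<circ> lam u) e'"
    hence "c1 e = c1 e'" using eq e by simp
    thus "e = e'" using proper_inj_inc[OF c1] e unfolding inj_on_def by blast
  qed
  thus ?thesis unfolding incC'[OF u] by (rule inj_on_imageI)
qed

lemma rho_d: "c \<in> proper_3ec C \<Longrightarrow> u \<in> ends G d \<Longrightarrow> rho c d = c (\<kappa> u)"
  using rho_lam[of c d u] dE unfolding inc_def lam_def by simp

end


definition ypsi1 :: "('v1, 'e1) mgraph \<Rightarrow> 'v1 \<Rightarrow> ('e1 \<Rightarrow> 'e2) \<Rightarrow> 'e1 \<Rightarrow> ('e1 + 'e2) + ('e1 \<times> 'e2)" where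
  "ypsi1 G1 v1 f e = (if e \<in> inc G1 v1 then Inr (e, f e) else Inl (Inl e))"
definition ypsi2 :: "('v1, 'e1) mgraph \<Rightarrow> ('v2, 'e2) mgraph \<Rightarrow> 'v1 \<Rightarrow> 'v2 \<Rightarrow> ('e1 \<Rightarrow> 'e2) \<Rightarrow> 'e2 \<Rightarrow> ('e1 + 'e2) + ('e1 \<times> 'e2)" where
  "ypsi2 G1 G2 v1 v2 f e = (if e \<in> inc G2 v2 then Inr (inv_into (inc G1 v1) f e, e) else Inl (Inr e))"

locale ycomp =
  fixes G1 :: "('v1, 'e1) mgraph" and G2 :: "('v2, 'e2) mgraph" and v1 v2 f
  assumes cub1: "cubic G1" and cub2: "cubic G2" and v1: "v1 \<in> verts G1" and v2: "v2 \<in> verts G2"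
    and bij: "bij_betw f (inc G1 v1) (inc G2 v2)"
begin

abbreviation "C \<equiv> Y_comp G1 G2 v1 v2 f"
abbreviation "\<psi>1 \<equiv> ypsi1 G1 v1 f"
abbreviation "\<psi>2 \<equiv> ypsi2 G1 G2 v1 v2 f"
abbreviation "g \<equiv> inv_into (inc G1 v1) f"

lemma edgesC: "edges C = Inl ` Inl ` (edges G1 - inc G1 v1) \<union> Inl ` Inr ` (edges G2 - inc G2 v2)
              \<union> Inr ` {(e, f e) | e. e \<in> inc G1 v1}"
  unfolding Y_comp_def by simp

lemma endsC1: "ends C (Inl (Inl e)) = Inl ` ends G1 e" unfolding Y_comp_def by simp
lemma endsC2: "ends C (Inl (Inr e)) = Inr ` ends G2 e" unfolding Y_comp_def by simp
lemma endsC3: "ends C (Inr (a, b)) = {Inl (other_end G1 a v1), Inr (other_end G2 b v2)}" unfolding Y_comp_def by simp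
lemma vertsC: "verts C = Inl ` (verts G1 - {v1}) \<union> Inr ` (verts G2 - {v2})" unfolding Y_comp_def by simp

lemma gf: "e \<in> inc G1 v1 \<Longrightarrow> g (f e) = e" using bij_betw_inv_into_left[OF bij] .
lemma fg: "e \<in> inc G2 v2 \<Longrightarrow> f (g e) = e" using bij_betw_inv_into_right[OF bij] .
lemma g_in: "e \<in> inc G2 v2 \<Longrightarrow> g e \<in> inc G1 v1" using bij bij_betw_inv_into bij_betwE by metis
lemma f_in: "e \<in> inc G1 v1 \<Longrightarrow> f e \<in> inc G2 v2" using bij bij_betwE by metis

lemma psi2f: "e \<in> inc G1 v1 \<Longrightarrow> \<psi>2 (f e) = \<psi>1 e"
  unfolding ypsi1_def ypsi2_def using f_in gf by simp

lemma wf1: "wf_mgraph G1" using cubicD(1)[OF cub1] .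
lemma wf2: "wf_mgraph G2" using cubicD(1)[OF cub2] .

lemma fin: "finite (edges C)"
proof -
  have "finite (edges G1)" "finite (edges G2)" using cubicD(3) cub1 cub2 by auto
  moreover have "{(e, f e) | e. e \<in> inc G1 v1} = (\<lambda>e. (e, f e)) ` inc G1 v1" by blast
  moreover have "finite (inc G1 v1)" by (rule finite_subset[OF inc_sub cubicD(3)[OF cub1]])
  ultimately show ?thesis unfolding edgesC by simp
qed

lemma inc1: assumes u: "u \<in> verts G1" "u \<noteq> v1" shows "inc C (Inl u) = \<psi>1 ` inc G1 u"
proof
  show "inc C (Inl u) \<subseteq> \<psi>1 ` inc G1 u"
  proof
    fix z assume z: "z \<in> inc C (Inl u)"
    hence zE: "z \<in> edges C" and zu: "Inl u \<in> ends C z" unfolding inc_def by auto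
    show "z \<in> \<psi>1 ` inc G1 u"
    proof (cases z)
      case (Inl z1)
      show ?thesis
      proof (cases z1)
        case (Inl e)
        have e: "e \<in> edges G1" "e \<notin> inc G1 v1" using zE \<open>z = Inl z1\<close> Inl unfolding edgesC by auto
        have "u \<in> ends G1 e" using zu \<open>z = Inl z1\<close> Inl endsC1 by auto
        hence "e \<in> inc G1 u" using e unfolding inc_def by blast
        moreover have "\<psi>1 e = z" using e \<open>z = Inl z1\<close> Inl unfolding ypsi1_def by simp
        ultimately show ?thesis by blast
      next
        case (Inr e)
        thus ?thesis using zu \<open>z = Inl z1\<close> endsC2 by auto
      qed
    next
      case (Inr p)
      then obtain e where e: "e \<in> inc G1 v1" "z = Inr (e, f e)" using zE unfolding edgesC by auto
      have "u = other_end G1 e v1" using zu e endsC3 by auto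
      hence "u \<in> ends G1 e" using other_end[OF wf1 e(1)] by blast
      hence "e \<in> inc G1 u" using e incD(1) unfolding inc_def by blast
      moreover have "\<psi>1 e = z" using e unfolding ypsi1_def by simp
      ultimately show ?thesis by blast
    qed
  qed
  show "\<psi>1 ` inc G1 u \<subseteq> inc C (Inl u)"
  proof
    fix z assume "z \<in> \<psi>1 ` inc G1 u"
    then obtain e where e: "e \<in> inc G1 u" "z = \<psi>1 e" by blast
    have eE: "e \<in> edges G1" "u \<in> ends G1 e" using incD(1)[OF e(1)] incD(2)[OF e(1)] by auto
    show "z \<in> inc C (Inl u)"
    proof (cases "e \<in> inc G1 v1")
      case True
      have "ends G1 e = {v1, other_end G1 e v1}" using other_end[OF wf1 True] by blast
      hence "u = other_end G1 e v1" using eE u by blast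
      moreover have "z = Inr (e, f e)" using e True unfolding ypsi1_def by simp
      ultimately show ?thesis unfolding inc_def using True edgesC endsC3 by auto
    next
      case False
      hence "z = Inl (Inl e)" using e unfolding ypsi1_def by simp
      thus ?thesis unfolding inc_def using False eE edgesC endsC1 by auto
    qed
  qed
qed

lemma inc2: assumes u: "u \<in> verts G2" "u \<noteq> v2" shows "inc C (Inr u) = \<psi>2 ` inc G2 u"
proof
  show "inc C (Inr u) \<subseteq> \<psi>2 ` inc G2 u"
  proof
    fix z assume z: "z \<in> inc C (Inr u)"
    hence zE: "z \<in> edges C" and zu: "Inr u \<in> ends C z" unfolding inc_def by auto
    show "z \<in> \<psi>2 ` inc G2 u"
    proof (cases z)
      case (Inl z1)
      show ?thesis
      proof (cases z1)
        case (Inr e)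
        have e: "e \<in> edges G2" "e \<notin> inc G2 v2" using zE \<open>z = Inl z1\<close> Inr unfolding edgesC by auto
        have "u \<in> ends G2 e" using zu \<open>z = Inl z1\<close> Inr endsC2 by auto
        hence "e \<in> inc G2 u" using e unfolding inc_def by blast
        moreover have "\<psi>2 e = z" using e \<open>z = Inl z1\<close> Inr unfolding ypsi2_def by simp
        ultimately show ?thesis by blast
      next
        case (Inl e)
        thus ?thesis using zu \<open>z = Inl z1\<close> endsC1 by auto
      qed
    next
      case (Inr p)
      then obtain e where e: "e \<in> inc G1 v1" "z = Inr (e, f e)" using zE unfolding edgesC by auto
      have fe: "f e \<in> inc G2 v2" using f_in[OF e(1)] .
      have "u = other_end G2 (f e) v2" using zu e endsC3 by auto
      hence "u \<in> ends G2 (f e)" using other_end[OF wf2 fe] by blast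
      hence "f e \<in> inc G2 u" using fe incD(1) unfolding inc_def by blast
      moreover have "\<psi>2 (f e) = z" using e psi2f unfolding ypsi1_def by simp
      ultimately show ?thesis by blast
    qed
  qed
  show "\<psi>2 ` inc G2 u \<subseteq> inc C (Inr u)"
  proof
    fix z assume "z \<in> \<psi>2 ` inc G2 u"
    then obtain e where e: "e \<in> inc G2 u" "z = \<psi>2 e" by blast
    have eE: "e \<in> edges G2" "u \<in> ends G2 e" using incD(1)[OF e(1)] incD(2)[OF e(1)] by auto
    show "z \<in> inc C (Inr u)"
    proof (cases "e \<in> inc G2 v2")
      case True
      have "ends G2 e = {v2, other_end G2 e v2}" using other_end[OF wf2 True] by blast
      hence "u = other_end G2 e v2" using eE u by blast
      moreover have zz: "z = Inr (g e, f (g e))" using e True fg unfolding ypsi2_def by simp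
      moreover have "g e \<in> inc G1 v1" using g_in[OF True] .
      ultimately have zC: "z \<in> edges C" unfolding edgesC by blast
      have "ends C z = {Inl (other_end G1 (g e) v1), Inr (other_end G2 e v2)}" using zz endsC3 fg[OF True] by simp
      hence "Inr u \<in> ends C z" using \<open>u = other_end G2 e v2\<close> by simp
      thus ?thesis using zC unfolding inc_def by blast
    next
      case False
      hence "z = Inl (Inr e)" using e unfolding ypsi2_def by simp
      thus ?thesis unfolding inc_def using False eE edgesC endsC2 by auto
    qed
  qed
qed

lemma side1: "yside G1 C v1 \<psi>1 Inl"
proof
  show "cubic G1" "v1 \<in> verts G1" "finite (edges C)" by (rule cub1, rule v1, rule fin)
  show "inj_on \<psi>1 (edges G1)" unfolding inj_on_def ypsi1_def by auto
  show "\<And>e. e \<in> edges G1 \<Longrightarrow> \<psi>1 e \<in> edges C" unfolding ypsi1_def edgesC by auto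
  show "\<And>u. u \<in> verts G1 \<Longrightarrow> u \<noteq> v1 \<Longrightarrow> inc C (Inl u) = \<psi>1 ` inc G1 u" by (rule inc1)
  show "\<And>e. e \<in> edges G1 \<Longrightarrow> e \<notin> inc G1 v1 \<Longrightarrow> ends C (\<psi>1 e) = Inl ` ends G1 e"
    unfolding ypsi1_def using endsC1 by simp
qed

lemma side2: "yside G2 C v2 \<psi>2 Inr"
proof
  show "cubic G2" "v2 \<in> verts G2" "finite (edges C)" by (rule cub2, rule v2, rule fin)
  show "inj_on \<psi>2 (edges G2)" unfolding inj_on_def ypsi2_def by auto
  show "\<And>e. e \<in> edges G2 \<Longrightarrow> \<psi>2 e \<in> edges C"
  proof -
    fix e assume e: "e \<in> edges G2"
    show "\<psi>2 e \<in> edges C"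
    proof (cases "e \<in> inc G2 v2")
      case True
      hence "\<psi>2 e = Inr (g e, f (g e))" unfolding ypsi2_def using fg by simp
      thus ?thesis using g_in[OF True] unfolding edgesC by blast
    next
      case False thus ?thesis using e unfolding ypsi2_def edgesC by auto
    qed
  qed
  show "\<And>u. u \<in> verts G2 \<Longrightarrow> u \<noteq> v2 \<Longrightarrow> inc C (Inr u) = \<psi>2 ` inc G2 u" by (rule inc2)
  show "\<And>e. e \<in> edges G2 \<Longrightarrow> e \<notin> inc G2 v2 \<Longrightarrow> ends C (\<psi>2 e) = Inr ` ends G2 e"
    unfolding ypsi2_def using endsC2 by simp
qed

end


lemma third: "a \<in> {1,2,3::nat} \<Longrightarrow> b \<in> {1,2,3} \<Longrightarrow> p \<in> {1,2,3} \<Longrightarrow> q \<in> {1,2,3} \<Longrightarrow> p \<noteq> q \<Longrightarrow>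
   a \<noteq> p \<Longrightarrow> a \<noteq> q \<Longrightarrow> b \<noteq> p \<Longrightarrow> b \<noteq> q \<Longrightarrow> a = b"
  by auto

lemma match_sw:
  assumes c1: "c1 \<in> proper_3ec G1" and c2: "c2 \<in> proper_3ec G2"
    and bij: "bij_betw f (inc G1 v1) (inc G2 v2)" and k1: "card (inc G1 v1) = 3" and k2: "card (inc G2 v2) = 3"
    and fin: "finite (edges G2)"
  shows "\<exists>c2'. (c2, c2') \<in> kempe_equiv G2 \<and> (\<forall>e\<in>inc G1 v1. c2' (f e) = c1 e)"
proof -
  obtain e1 e2 e3 where I: "inc G1 v1 = {e1,e2,e3}" and d: "e1 \<noteq> e2" "e2 \<noteq> e3" "e1 \<noteq> e3"
    using k1 card_3_iff by metis
  have fi: "f e1 \<in> inc G2 v2" "f e2 \<in> inc G2 v2" "f e3 \<in> inc G2 v2" using bij I bij_betwE by blast+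
  have fE: "f e1 \<in> edges G2" "f e2 \<in> edges G2" "f e3 \<in> edges G2" using fi incD(1) by metis+
  have fd: "f e1 \<noteq> f e2" "f e1 \<noteq> f e3" "f e2 \<noteq> f e3" using bij I d unfolding bij_betw_def inj_on_def by blast+
  have b1: "bij_betw c1 (inc G1 v1) {1,2,3}" using proper_bij_inc[OF c1 k1] .
  have c1v: "c1 e1 \<in> {1,2,3}" "c1 e2 \<in> {1,2,3}" "c1 e3 \<in> {1,2,3}" using b1 I bij_betwE by blast+
  have c1d: "c1 e1 \<noteq> c1 e2" "c1 e1 \<noteq> c1 e3" "c1 e2 \<noteq> c1 e3" using b1 I d unfolding bij_betw_def inj_on_def by blast+
  define h1 where "h1 = pm G2 (sw (c2 (f e1)) (c1 e1)) c2"
  have p1: "perm3 (sw (c2 (f e1)) (c1 e1))" using perm3_sw proper_val[OF c2 fE(1)] c1v(1) by blast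
  have h1p: "h1 \<in> proper_3ec G2" unfolding h1_def using pm_proper[OF c2 p1] .
  have k1': "(c2, h1) \<in> kempe_equiv G2" unfolding h1_def using ke_pm_sw[OF fin c2 proper_val[OF c2 fE(1)] c1v(1)] .
  have h1e1: "h1 (f e1) = c1 e1" unfolding h1_def pm_def sw_def using fE by simp
  have h1i: "inj_on h1 (inc G2 v2)" using proper_inj_inc[OF h1p] .
  define h2 where "h2 = pm G2 (sw (h1 (f e2)) (c1 e2)) h1"
  have p2: "perm3 (sw (h1 (f e2)) (c1 e2))" using perm3_sw proper_val[OF h1p fE(2)] c1v(2) by blast
  have h2p: "h2 \<in> proper_3ec G2" unfolding h2_def using pm_proper[OF h1p p2] .
  have k2': "(h1, h2) \<in> kempe_equiv G2" unfolding h2_def using ke_pm_sw[OF fin h1p proper_val[OF h1p fE(2)] c1v(2)] .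
  have h2e2: "h2 (f e2) = c1 e2" unfolding h2_def pm_def sw_def using fE by simp
  have "h1 (f e2) \<noteq> h1 (f e1)" using h1i fi fd unfolding inj_on_def by metis
  hence h2e1: "h2 (f e1) = c1 e1" unfolding h2_def pm_def sw_def using fE h1e1 c1d by auto
  have h2i: "inj_on h2 (inc G2 v2)" using proper_inj_inc[OF h2p] .
  have "h2 (f e3) \<noteq> h2 (f e1)" "h2 (f e3) \<noteq> h2 (f e2)" using h2i fi fd unfolding inj_on_def by metis+
  hence h2e3: "h2 (f e3) = c1 e3"
    using third[OF proper_val[OF h2p fE(3)] c1v(3) c1v(1) c1v(2) c1d(1)] h2e1 h2e2 c1d by auto
  have "(c2, h2) \<in> kempe_equiv G2" using k1' k2' ke_trans by metis
  moreover have "\<forall>e\<in>inc G1 v1. h2 (f e) = c1 e" using I h2e1 h2e2 h2e3 by auto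
  ultimately show ?thesis by blast
qed

sublocale ycomp \<subseteq> S1: yside G1 "Y_comp G1 G2 v1 v2 f" v1 "ypsi1 G1 v1 f" Inl by (rule side1)
sublocale ycomp \<subseteq> S2: yside G2 "Y_comp G1 G2 v1 v2 f" v2 "ypsi2 G1 G2 v1 v2 f" Inr by (rule side2)

context ycomp
begin

lemma cover: "z \<in> edges C \<Longrightarrow> (\<exists>e\<in>edges G1. z = \<psi>1 e) \<or> (\<exists>e\<in>edges G2. z = \<psi>2 e)"
proof -
  assume z: "z \<in> edges C"
  show ?thesis
  proof (cases z)
    case (Inl z1)
    show ?thesis
    proof (cases z1)
      case (Inl e)
      hence "e \<in> edges G1" "e \<notin> inc G1 v1" using z \<open>z = Inl z1\<close> unfolding edgesC by auto
      thus ?thesis using \<open>z = Inl z1\<close> Inl unfolding ypsi1_def by auto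
    next
      case (Inr e)
      hence "e \<in> edges G2" "e \<notin> inc G2 v2" using z \<open>z = Inl z1\<close> unfolding edgesC by auto
      thus ?thesis using \<open>z = Inl z1\<close> Inr unfolding ypsi2_def by auto
    qed
  next
    case (Inr p)
    then obtain e where e: "e \<in> inc G1 v1" "z = Inr (e, f e)" using z unfolding edgesC by auto
    hence "z = \<psi>1 e" unfolding ypsi1_def by simp
    thus ?thesis using incD(1)[OF e(1)] by blast
  qed
qed

lemma vert1: assumes z: "z \<in> edges C" and w: "Inl u \<in> ends C z" shows "u \<in> verts G1 \<and> u \<noteq> v1"
proof (cases z)
  case (Inl z1)
  show ?thesis
  proof (cases z1)
    case (Inl e)
    hence e: "e \<in> edges G1" "e \<notin> inc G1 v1" using z \<open>z = Inl z1\<close> unfolding edgesC by auto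
    have ue: "u \<in> ends G1 e" using w \<open>z = Inl z1\<close> Inl endsC1 by auto
    have "u \<in> verts G1" using cubicD(5)[OF cub1 e(1)] ue by (rule subsetD)
    moreover have "u \<noteq> v1" using e(1) e(2) ue unfolding inc_def by auto
    ultimately show ?thesis by simp
  next
    case (Inr e) thus ?thesis using w \<open>z = Inl z1\<close> endsC2 by auto
  qed
next
  case (Inr p)
  then obtain e where e: "e \<in> inc G1 v1" "z = Inr (e, f e)" using z unfolding edgesC by auto
  hence uo: "u = other_end G1 e v1" using w endsC3 by auto
  have oe: "ends G1 e = {v1, other_end G1 e v1}" "other_end G1 e v1 \<noteq> v1" using other_end[OF wf1 e(1)] by auto
  have "other_end G1 e v1 \<in> verts G1" using cubicD(5)[OF cub1 incD(1)[OF e(1)]] oe(1) by auto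
  thus ?thesis using uo oe(2) by simp
qed

lemma vert2: assumes z: "z \<in> edges C" and w: "Inr u \<in> ends C z" shows "u \<in> verts G2 \<and> u \<noteq> v2"
proof (cases z)
  case (Inl z1)
  show ?thesis
  proof (cases z1)
    case (Inr e)
    hence e: "e \<in> edges G2" "e \<notin> inc G2 v2" using z \<open>z = Inl z1\<close> unfolding edgesC by auto
    have ue: "u \<in> ends G2 e" using w \<open>z = Inl z1\<close> Inr endsC2 by auto
    have "u \<in> verts G2" using cubicD(5)[OF cub2 e(1)] ue by (rule subsetD)
    moreover have "u \<noteq> v2" using e(1) e(2) ue unfolding inc_def by auto
    ultimately show ?thesis by simp
  next
    case (Inl e) thus ?thesis using w \<open>z = Inl z1\<close> endsC1 by auto
  qed
next
  case (Inr p)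
  then obtain e where e: "e \<in> inc G1 v1" "z = Inr (e, f e)" using z unfolding edgesC by auto
  have fe: "f e \<in> inc G2 v2" using f_in[OF e(1)] .
  hence uo: "u = other_end G2 (f e) v2" using w e endsC3 by auto
  have oe: "ends G2 (f e) = {v2, other_end G2 (f e) v2}" "other_end G2 (f e) v2 \<noteq> v2" using other_end[OF wf2 fe] by auto
  have "other_end G2 (f e) v2 \<in> verts G2" using cubicD(5)[OF cub2 incD(1)[OF fe]] oe(1) by auto
  thus ?thesis using uo oe(2) by simp
qed

lemma psi1_not_psi2: "e \<in> edges G1 - inc G1 v1 \<Longrightarrow> \<psi>1 e \<noteq> \<psi>2 e'"
  unfolding ypsi1_def ypsi2_def by (simp split: if_split)
lemma psi2_not_psi1: "e \<in> edges G2 - inc G2 v2 \<Longrightarrow> \<psi>2 e \<noteq> \<psi>1 e'"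
  unfolding ypsi1_def ypsi2_def by (simp split: if_split)

theorem Y_main: "K3 C = K3 G1 * K3 G2"
proof (rule comp_card[where rA = S1.rho and rB = S2.rho and SpA = "inc G1 v1" and SpB = "inc G2 v2"])
  show "finite (edges C)" "finite (edges G1)" "finite (edges G2)" using fin cubicD(3) cub1 cub2 by auto
  show "inc G1 v1 \<subseteq> edges G1" "inc G2 v2 \<subseteq> edges G2" by (rule inc_sub)+
  show "\<And>e e'. e \<in> inc G1 v1 \<Longrightarrow> e' \<in> inc G1 v1 \<Longrightarrow> ends G1 e \<inter> ends G1 e' \<noteq> {}" unfolding inc_def by blast
  show "\<And>e e'. e \<in> inc G2 v2 \<Longrightarrow> e' \<in> inc G2 v2 \<Longrightarrow> ends G2 e \<inter> ends G2 e' \<noteq> {}" unfolding inc_def by blast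
  show "\<And>c. c \<in> proper_3ec C \<Longrightarrow> S1.rho c \<in> proper_3ec G1 \<and> S2.rho c \<in> proper_3ec G2"
    using S1.rho_proper S2.rho_proper by blast
  show "\<And>c c'. c \<in> proper_3ec C \<Longrightarrow> c' \<in> proper_3ec C \<Longrightarrow> S1.rho c = S1.rho c' \<Longrightarrow> S2.rho c = S2.rho c' \<Longrightarrow> c = c'"
  proof
    fix c c' z assume c: "c \<in> proper_3ec C" "c' \<in> proper_3ec C" and r: "S1.rho c = S1.rho c'" "S2.rho c = S2.rho c'"
    show "c z = c' z"
    proof (cases "z \<in> edges C")
      case True
      show ?thesis
      proof (cases "\<exists>e\<in>edges G1. z = \<psi>1 e")
        case True
        then obtain e where "e \<in> edges G1" "z = \<psi>1 e" by blast
        thus ?thesis using fun_cong[OF r(1), of e] unfolding S1.rho_def by simp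
      next
        case False
        then obtain e where "e \<in> edges G2" "z = \<psi>2 e" using cover \<open>z \<in> edges C\<close> by blast
        thus ?thesis using fun_cong[OF r(2), of e] unfolding S2.rho_def by simp
      qed
    next
      case False thus ?thesis using proper_out c by metis
    qed
  qed
  show "\<And>c c'. kempe_step C c c' \<Longrightarrow> (S1.rho c, S1.rho c') \<in> kempe_equiv G1 \<and> (S2.rho c, S2.rho c') \<in> kempe_equiv G2"
    using S1.down S2.down by blast
  show "\<And>c h. c \<in> proper_3ec C \<Longrightarrow> Nrel G1 (inc G1 v1) (S1.rho c) h \<Longrightarrow>
          \<exists>c'. (c, c') \<in> kempe_equiv C \<and> S1.rho c' = h \<and> S2.rho c' = S2.rho c"
  proof -
    fix c h assume c: "c \<in> proper_3ec C" and N: "Nrel G1 (inc G1 v1) (S1.rho c) h"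
    then obtain a b S where ab: "a \<in> {1,2,3}" "b \<in> {1,2,3}" "a \<noteq> b" and cl: "closed G1 (S1.rho c) a b S"
      and Sv: "S \<inter> inc G1 v1 = {}" and h: "h = kempe_switch (S1.rho c) a b S" unfolding Nrel_def by blast
    have L: "closed C c a b (\<psi>1 ` S)" "S1.rho (kempe_switch c a b (\<psi>1 ` S)) = h"
      using S1.lift[OF c cl Sv] h by auto
    have SE: "S \<subseteq> edges G1 - inc G1 v1" using cl Sv unfolding closed_def by blast
    have "S2.rho (kempe_switch c a b (\<psi>1 ` S)) = S2.rho c"
    proof (rule S2.rho_disj)
      fix e assume "e \<in> edges G2"
      show "\<psi>2 e \<notin> \<psi>1 ` S"
      proof
        assume "\<psi>2 e \<in> \<psi>1 ` S"
        then obtain x where x: "x \<in> S" "\<psi>2 e = \<psi>1 x" by blast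
        have "\<psi>1 x \<noteq> \<psi>2 e" using psi1_not_psi2 SE x(1) by blast
        thus False using x(2) by simp
      qed
    qed
    moreover have "(c, kempe_switch c a b (\<psi>1 ` S)) \<in> kempe_equiv C"
      using closed_switch_equiv[OF fin c L(1) ab] .
    ultimately show "\<exists>c'. (c, c') \<in> kempe_equiv C \<and> S1.rho c' = h \<and> S2.rho c' = S2.rho c" using L by blast
  qed
  show "\<And>c h. c \<in> proper_3ec C \<Longrightarrow> Nrel G2 (inc G2 v2) (S2.rho c) h \<Longrightarrow>
          \<exists>c'. (c, c') \<in> kempe_equiv C \<and> S2.rho c' = h \<and> S1.rho c' = S1.rho c"
  proof -
    fix c h assume c: "c \<in> proper_3ec C" and N: "Nrel G2 (inc G2 v2) (S2.rho c) h"
    then obtain a b S where ab: "a \<in> {1,2,3}" "b \<in> {1,2,3}" "a \<noteq> b" and cl: "closed G2 (S2.rho c) a b S"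
      and Sv: "S \<inter> inc G2 v2 = {}" and h: "h = kempe_switch (S2.rho c) a b S" unfolding Nrel_def by blast
    have L: "closed C c a b (\<psi>2 ` S)" "S2.rho (kempe_switch c a b (\<psi>2 ` S)) = h"
      using S2.lift[OF c cl Sv] h by auto
    have SE: "S \<subseteq> edges G2 - inc G2 v2" using cl Sv unfolding closed_def by blast
    have "S1.rho (kempe_switch c a b (\<psi>2 ` S)) = S1.rho c"
    proof (rule S1.rho_disj)
      fix e assume "e \<in> edges G1"
      show "\<psi>1 e \<notin> \<psi>2 ` S"
      proof
        assume "\<psi>1 e \<in> \<psi>2 ` S"
        then obtain x where x: "x \<in> S" "\<psi>1 e = \<psi>2 x" by blast
        have "\<psi>2 x \<noteq> \<psi>1 e" using psi2_not_psi1 SE x(1) by blast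
        thus False using x(2) by simp
      qed
    qed
    moreover have "(c, kempe_switch c a b (\<psi>2 ` S)) \<in> kempe_equiv C"
      using closed_switch_equiv[OF fin c L(1) ab] .
    ultimately show "\<exists>c'. (c, c') \<in> kempe_equiv C \<and> S2.rho c' = h \<and> S1.rho c' = S1.rho c" using L by blast
  qed
  show "\<And>\<pi> c. perm3 \<pi> \<Longrightarrow> c \<in> proper_3ec C \<Longrightarrow>
      S1.rho (pm C \<pi> c) = pm G1 \<pi> (S1.rho c) \<and> S2.rho (pm C \<pi> c) = pm G2 \<pi> (S2.rho c)"
    using S1.rho_pm S2.rho_pm by blast
  show "\<And>c c' \<pi>. c \<in> proper_3ec C \<Longrightarrow> c' \<in> proper_3ec C \<Longrightarrow> perm3 \<pi> \<Longrightarrow>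
      S2.rho c = S2.rho c' \<Longrightarrow> S1.rho c = pm G1 \<pi> (S1.rho c') \<Longrightarrow> (Nrel G1 (inc G1 v1))\<^sup>*\<^sup>* (S1.rho c) (S1.rho c')"
  proof -
    fix c c' \<pi> assume c: "c \<in> proper_3ec C" "c' \<in> proper_3ec C" and p: "perm3 \<pi>"
      and r2: "S2.rho c = S2.rho c'" and r1: "S1.rho c = pm G1 \<pi> (S1.rho c')"
    have cmp: "S1.rho k e = S2.rho k (f e)" if e: "e \<in> inc G1 v1" for k e
      using psi2f[OF e] incD(1)[OF e] incD(1)[OF f_in[OF e]] unfolding S1.rho_def S2.rho_def by simp
    have fix1: "\<pi> (S1.rho c' e) = S1.rho c' e" if e: "e \<in> inc G1 v1" for e
    proof -
      have "\<pi> (S1.rho c' e) = S1.rho c e" using r1 incD(1)[OF e] unfolding pm_def by simp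
      also have "\<dots> = S1.rho c' e" using cmp[OF e, of c] cmp[OF e, of c'] r2 by simp
      finally show ?thesis .
    qed
    have "S1.rho c' ` inc G1 v1 = {1,2,3}" using S1.rho_bij[OF c(2) v1] unfolding bij_betw_def by blast
    hence "\<And>z. z \<in> {1,2,3} \<Longrightarrow> \<pi> z = z" using fix1 by (metis imageE)
    hence "pm G1 \<pi> (S1.rho c') = S1.rho c'" using pm_id[OF S1.rho_proper[OF c(2)]] by blast
    thus "(Nrel G1 (inc G1 v1))\<^sup>*\<^sup>* (S1.rho c) (S1.rho c')" using r1 by simp
  qed
  show "\<And>c1 c2. c1 \<in> proper_3ec G1 \<Longrightarrow> c2 \<in> proper_3ec G2 \<Longrightarrow>
      \<exists>c\<in>proper_3ec C. (S1.rho c, c1) \<in> kempe_equiv G1 \<and> (S2.rho c, c2) \<in> kempe_equiv G2"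
  proof -
    fix c1 c2 assume c1: "c1 \<in> proper_3ec G1" and c2: "c2 \<in> proper_3ec G2"
    obtain c2' where k: "(c2, c2') \<in> kempe_equiv G2" and m: "\<forall>e\<in>inc G1 v1. c2' (f e) = c1 e"
      using match_sw[OF c1 c2 bij cubicD(2)[OF cub1 v1] cubicD(2)[OF cub2 v2] cubicD(3)[OF cub2]] by blast
    have c2'p: "c2' \<in> proper_3ec G2" using ke_proper[OF k] by blast
    define c where "c z = (if z \<in> edges C then (case z of Inl (Inl e) \<Rightarrow> c1 e | Inl (Inr e) \<Rightarrow> c2' e | Inr (e, e') \<Rightarrow> c1 e)
       else undefined)" for z
    have e1: "c (\<psi>1 e) = c1 e" if e: "e \<in> edges G1" for e
      using S1.psiE[OF e] unfolding c_def ypsi1_def by (cases "e \<in> inc G1 v1") auto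
    have e2: "c (\<psi>2 e) = c2' e" if e: "e \<in> edges G2" for e
    proof (cases "e \<in> inc G2 v2")
      case True
      have "c (\<psi>2 e) = c1 (g e)" using S2.psiE[OF e] True unfolding c_def ypsi2_def by simp
      also have "\<dots> = c2' (f (g e))" using m g_in[OF True] by simp
      finally show ?thesis using fg[OF True] by simp
    next
      case False thus ?thesis using S2.psiE[OF e] unfolding c_def ypsi2_def by simp
    qed
    have cp: "c \<in> proper_3ec C"
    proof (rule proper_local)
      show "\<And>z. z \<notin> edges C \<Longrightarrow> c z = undefined" unfolding c_def by simp
      show "\<And>z. z \<in> edges C \<Longrightarrow> c z \<in> {1,2,3}"
      proof -
        fix z assume "z \<in> edges C"
        then consider "\<exists>e\<in>edges G1. z = \<psi>1 e" | "\<exists>e\<in>edges G2. z = \<psi>2 e" using cover by blast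
        thus "c z \<in> {1,2,3}"
        proof cases
          case 1 then obtain e where e: "e \<in> edges G1" "z = \<psi>1 e" by blast
          thus ?thesis using e1[OF e(1)] proper_val[OF c1 e(1)] by simp
        next
          case 2 then obtain e where e: "e \<in> edges G2" "z = \<psi>2 e" by blast
          thus ?thesis using e2[OF e(1)] proper_val[OF c2'p e(1)] by simp
        qed
      qed
      show "\<And>w. inj_on c (inc C w)"
      proof -
        fix w show "inj_on c (inc C w)"
        proof (cases w)
          case (Inl u)
          show ?thesis
          proof (cases "u \<in> verts G1 \<and> u \<noteq> v1")
            case True thus ?thesis using S1.inj_local[OF c1 e1] Inl by blast
          next
            case False
            hence "inc C w = {}" using vert1 Inl unfolding inc_def by blast
            thus ?thesis by simp
          qed
        next
          case (Inr u)
          show ?thesis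
          proof (cases "u \<in> verts G2 \<and> u \<noteq> v2")
            case True thus ?thesis using S2.inj_local[OF c2'p e2] Inr by blast
          next
            case False
            hence "inc C w = {}" using vert2 Inr unfolding inc_def by blast
            thus ?thesis by simp
          qed
        qed
      qed
    qed
    have "S1.rho c = c1" using S1.rho_eq[OF c1 e1] .
    moreover have "S2.rho c = c2'" using S2.rho_eq[OF c2'p e2] .
    ultimately show "\<exists>c\<in>proper_3ec C. (S1.rho c, c1) \<in> kempe_equiv G1 \<and> (S2.rho c, c2) \<in> kempe_equiv G2"
      using cp ke_refl[OF c1] ke_sym[OF k] by metis
  qed
qed

end


definition hpsi1 :: "'e1 \<Rightarrow> ('e1 + 'e2) + ('v1 \<times> 'v2)" where "hpsi1 e = Inl (Inl e)"
definition hpsi2 :: "'e2 \<Rightarrow> ('e1 + 'e2) + ('v1 \<times> 'v2)" where "hpsi2 e = Inl (Inr e)"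
definition hkap1 :: "('v1 \<Rightarrow> 'v2) \<Rightarrow> 'v1 \<Rightarrow> ('e1 + 'e2) + ('v1 \<times> 'v2)" where "hkap1 g u = Inr (u, g u)"
definition hkap2 :: "('v1, 'e1) mgraph \<Rightarrow> 'e1 \<Rightarrow> ('v1 \<Rightarrow> 'v2) \<Rightarrow> 'v2 \<Rightarrow> ('e1 + 'e2) + ('v1 \<times> 'v2)" where
  "hkap2 G1 d1 g w = Inr (inv_into (ends G1 d1) g w, w)"

lemma perm_fix_one:
  assumes p: "perm3 \<pi>" and a: "\<alpha> \<in> {1,2,3}" and fa: "\<pi> \<alpha> = \<alpha>" and nf: "\<exists>z\<in>{1,2,3}. \<pi> z \<noteq> z"
  shows "\<exists>\<beta> \<gamma>. \<beta> \<in> {1,2,3} \<and> \<gamma> \<in> {1,2,3} \<and> \<beta> \<noteq> \<gamma> \<and> \<alpha> \<noteq> \<beta> \<and> \<alpha> \<noteq> \<gamma> \<and> (\<forall>z\<in>{1,2,3}. \<pi> z = sw \<beta> \<gamma> z)"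
proof -
  obtain \<beta> \<gamma> where bg: "\<beta> \<in> {1,2,3::nat}" "\<gamma> \<in> {1,2,3}" "\<beta> \<noteq> \<gamma>" "\<alpha> \<noteq> \<beta>" "\<alpha> \<noteq> \<gamma>"
    and U: "{1,2,3} = {\<alpha>, \<beta>, \<gamma>}"
  proof -
    consider "\<alpha> = 1" | "\<alpha> = 2" | "\<alpha> = 3" using a by blast
    thus ?thesis
    proof cases
      case 1 thus ?thesis using that[of 2 3] by auto
    next
      case 2 thus ?thesis using that[of 1 3] by auto
    next
      case 3 thus ?thesis using that[of 1 2] by auto
    qed
  qed
  have pb: "\<pi> \<beta> \<in> {\<alpha>, \<beta>, \<gamma>}" "\<pi> \<gamma> \<in> {\<alpha>, \<beta>, \<gamma>}" using perm3_in[OF p] bg U by metis+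
  have nb: "\<pi> \<beta> \<noteq> \<alpha>" using perm3_inj[OF p bg(1) a] fa bg(4) by metis
  have ng: "\<pi> \<gamma> \<noteq> \<alpha>" using perm3_inj[OF p bg(2) a] fa bg(5) by metis
  have bgd: "\<pi> \<beta> \<noteq> \<pi> \<gamma>" using perm3_inj[OF p bg(1) bg(2)] bg(3) by metis
  have "\<pi> \<beta> = \<gamma> \<and> \<pi> \<gamma> = \<beta>"
  proof (cases "\<pi> \<beta> = \<beta>")
    case True
    hence "\<pi> \<gamma> = \<gamma>" using pb(2) ng bgd by auto
    hence "\<forall>z\<in>{1,2,3}. \<pi> z = z" using True fa U by auto
    thus ?thesis using nf by blast
  next
    case False
    hence "\<pi> \<beta> = \<gamma>" using pb(1) nb by auto
    moreover hence "\<pi> \<gamma> = \<beta>" using pb(2) ng bgd by auto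
    ultimately show ?thesis by simp
  qed
  hence "\<forall>z\<in>{1,2,3}. \<pi> z = sw \<beta> \<gamma> z" using U fa bg unfolding sw_def by auto
  thus ?thesis using bg by blast
qed

locale hcomp =
  fixes G1 :: "('v1, 'e1) mgraph" and G2 :: "('v2, 'e2) mgraph" and d1 d2 g x1 y1
  assumes cub1: "cubic G1" and cub2: "cubic G2" and d1: "d1 \<in> edges G1" and d2: "d2 \<in> edges G2"
    and bij: "bij_betw g (ends G1 d1) (ends G2 d2)" and dxy: "ends G1 d1 = {x1, y1}" and xy: "x1 \<noteq> y1"
begin

abbreviation "C \<equiv> H_comp G1 G2 d1 d2 g"
abbreviation "gi \<equiv> inv_into (ends G1 d1) g"
abbreviation "\<psi>1 \<equiv> (hpsi1 :: 'e1 \<Rightarrow> ('e1 + 'e2) + ('v1 \<times> 'v2))"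
abbreviation "\<psi>2 \<equiv> (hpsi2 :: 'e2 \<Rightarrow> ('e1 + 'e2) + ('v1 \<times> 'v2))"
abbreviation "\<kappa>1 \<equiv> (hkap1 g :: 'v1 \<Rightarrow> ('e1 + 'e2) + ('v1 \<times> 'v2))"
abbreviation "\<kappa>2 \<equiv> (hkap2 G1 d1 g :: 'v2 \<Rightarrow> ('e1 + 'e2) + ('v1 \<times> 'v2))"

lemma edgesC: "edges C = Inl ` Inl ` (edges G1 - {d1}) \<union> Inl ` Inr ` (edges G2 - {d2})
              \<union> Inr ` {(x, g x) | x. x \<in> ends G1 d1}"
  unfolding H_comp_def by simp
lemma endsC1: "ends C (Inl (Inl e)) = Inl ` ends G1 e" unfolding H_comp_def by simp
lemma endsC2: "ends C (Inl (Inr e)) = Inr ` ends G2 e" unfolding H_comp_def by simp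
lemma endsC3: "ends C (Inr (a, b)) = {Inl a, Inr b}" unfolding H_comp_def by simp

lemma gi_g: "x \<in> ends G1 d1 \<Longrightarrow> gi (g x) = x" using bij_betw_inv_into_left[OF bij] .
lemma g_gi: "w \<in> ends G2 d2 \<Longrightarrow> g (gi w) = w" using bij_betw_inv_into_right[OF bij] .
lemma gi_in: "w \<in> ends G2 d2 \<Longrightarrow> gi w \<in> ends G1 d1" using bij bij_betw_inv_into bij_betwE by metis
lemma dxy2: "ends G2 d2 = {g x1, g y1}" using bij dxy unfolding bij_betw_def by auto
lemma xy2: "g x1 \<noteq> g y1" using bij dxy xy unfolding bij_betw_def inj_on_def by auto

lemma fin: "finite (edges C)"
proof -
  have "finite (edges G1)" "finite (edges G2)" using cubicD(3) cub1 cub2 by auto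
  moreover have "{(x, g x) | x. x \<in> ends G1 d1} = (\<lambda>x. (x, g x)) ` {x1, y1}" using dxy by blast
  ultimately show ?thesis unfolding edgesC by simp
qed

lemma inc1: assumes u: "u \<in> verts G1"
  shows "inc C (Inl u) = \<psi>1 ` (inc G1 u - {d1}) \<union> (if u \<in> ends G1 d1 then {\<kappa>1 u} else {})"
proof (rule set_eqI)
  fix z show "z \<in> inc C (Inl u) \<longleftrightarrow> z \<in> \<psi>1 ` (inc G1 u - {d1}) \<union> (if u \<in> ends G1 d1 then {\<kappa>1 u} else {})"
  proof (cases z)
    case (Inl z1)
    show ?thesis
    proof (cases z1)
      case (Inl e)
      thus ?thesis using \<open>z = Inl z1\<close> unfolding inc_def hpsi1_def hkap1_def edgesC by (auto simp: endsC1 endsC2 endsC3)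
    next
      case (Inr e)
      thus ?thesis using \<open>z = Inl z1\<close> unfolding inc_def hpsi1_def hkap1_def edgesC by (auto simp: endsC1 endsC2 endsC3)
    qed
  next
    case (Inr p)
    then obtain a b where ab: "z = Inr (a, b)" by (cases p) auto
    show ?thesis unfolding ab inc_def hpsi1_def hkap1_def edgesC by (auto simp: endsC3)
  qed
qed

lemma inc2: assumes u: "u \<in> verts G2"
  shows "inc C (Inr u) = \<psi>2 ` (inc G2 u - {d2}) \<union> (if u \<in> ends G2 d2 then {\<kappa>2 u} else {})"
proof (rule set_eqI)
  fix z show "z \<in> inc C (Inr u) \<longleftrightarrow> z \<in> \<psi>2 ` (inc G2 u - {d2}) \<union> (if u \<in> ends G2 d2 then {\<kappa>2 u} else {})"
  proof (cases z)
    case (Inl z1)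
    show ?thesis
    proof (cases z1)
      case (Inl e)
      thus ?thesis using \<open>z = Inl z1\<close> unfolding inc_def hpsi2_def hkap2_def edgesC by (auto simp: endsC1 endsC2 endsC3)
    next
      case (Inr e)
      thus ?thesis using \<open>z = Inl z1\<close> unfolding inc_def hpsi2_def hkap2_def edgesC by (auto simp: endsC1 endsC2 endsC3)
    qed
  next
    case (Inr p)
    then obtain a b where ab: "z = Inr (a, b)" by (cases p) auto
    have "z \<in> inc C (Inr u) \<longleftrightarrow> a \<in> ends G1 d1 \<and> b = g a \<and> b = u"
      unfolding ab inc_def edgesC by (auto simp: endsC3)
    also have "\<dots> \<longleftrightarrow> u \<in> ends G2 d2 \<and> z = \<kappa>2 u"
    proof
      assume h: "a \<in> ends G1 d1 \<and> b = g a \<and> b = u"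
      hence "u \<in> ends G2 d2" using bij bij_betwE by metis
      moreover have "gi u = a" using h gi_g by blast
      moreover have "b = u" using h by blast
      ultimately show "u \<in> ends G2 d2 \<and> z = \<kappa>2 u" unfolding ab hkap2_def by simp
    next
      assume h: "u \<in> ends G2 d2 \<and> z = \<kappa>2 u"
      hence "a = gi u" "b = u" unfolding ab hkap2_def by auto
      thus "a \<in> ends G1 d1 \<and> b = g a \<and> b = u" using gi_in g_gi h by auto
    qed
    also have "\<dots> \<longleftrightarrow> z \<in> \<psi>2 ` (inc G2 u - {d2}) \<union> (if u \<in> ends G2 d2 then {\<kappa>2 u} else {})"
      unfolding ab hpsi2_def by auto
    finally show ?thesis .
  qed
qed

lemma side1: "hside G1 C d1 x1 y1 \<psi>1 \<kappa>1 Inl"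
proof
  show "cubic G1" "d1 \<in> edges G1" "ends G1 d1 = {x1, y1}" "x1 \<noteq> y1" "finite (edges C)"
    by (rule cub1, rule d1, rule dxy, rule xy, rule fin)
  show "inj_on \<psi>1 (edges G1 - {d1})" unfolding inj_on_def hpsi1_def by auto
  show "\<And>e. e \<in> edges G1 - {d1} \<Longrightarrow> \<psi>1 e \<in> edges C" unfolding hpsi1_def edgesC by auto
  show "\<And>u. u \<in> ends G1 d1 \<Longrightarrow> \<kappa>1 u \<in> edges C" unfolding hkap1_def edgesC by auto
  show "\<And>e u. e \<in> edges G1 - {d1} \<Longrightarrow> \<psi>1 e \<noteq> \<kappa>1 u" unfolding hkap1_def hpsi1_def by auto
  show "\<kappa>1 x1 \<noteq> \<kappa>1 y1" unfolding hkap1_def using xy by auto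
  show "\<And>u. u \<in> verts G1 \<Longrightarrow> inc C (Inl u) = \<psi>1 ` (inc G1 u - {d1}) \<union> (if u \<in> ends G1 d1 then {\<kappa>1 u} else {})"
    by (rule inc1)
  show "\<And>e. e \<in> edges G1 - {d1} \<Longrightarrow> ends C (\<psi>1 e) = Inl ` ends G1 e" unfolding hpsi1_def endsC1 by simp
qed

lemma side2: "hside G2 C d2 (g x1) (g y1) \<psi>2 \<kappa>2 Inr"
proof
  show "cubic G2" "d2 \<in> edges G2" "ends G2 d2 = {g x1, g y1}" "g x1 \<noteq> g y1" "finite (edges C)"
    by (rule cub2, rule d2, rule dxy2, rule xy2, rule fin)
  show "inj_on \<psi>2 (edges G2 - {d2})" unfolding inj_on_def hpsi2_def by auto
  show "\<And>e. e \<in> edges G2 - {d2} \<Longrightarrow> \<psi>2 e \<in> edges C" unfolding hpsi2_def edgesC by auto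
  show "\<And>u. u \<in> ends G2 d2 \<Longrightarrow> \<kappa>2 u \<in> edges C"
  proof -
    fix u assume u: "u \<in> ends G2 d2"
    have "\<kappa>2 u = Inr (gi u, g (gi u))" unfolding hkap2_def using g_gi[OF u] by simp
    thus "\<kappa>2 u \<in> edges C" using gi_in[OF u] unfolding edgesC by blast
  qed
  show "\<And>e u. e \<in> edges G2 - {d2} \<Longrightarrow> \<psi>2 e \<noteq> \<kappa>2 u" unfolding hkap2_def hpsi2_def by auto
  show "\<kappa>2 (g x1) \<noteq> \<kappa>2 (g y1)" unfolding hkap2_def using xy2 by auto
  show "\<And>u. u \<in> verts G2 \<Longrightarrow> inc C (Inr u) = \<psi>2 ` (inc G2 u - {d2}) \<union> (if u \<in> ends G2 d2 then {\<kappa>2 u} else {})"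
    by (rule inc2)
  show "\<And>e. e \<in> edges G2 - {d2} \<Longrightarrow> ends C (\<psi>2 e) = Inr ` ends G2 e" unfolding hpsi2_def endsC2 by simp
qed

end


sublocale hcomp \<subseteq> S1: hside G1 "H_comp G1 G2 d1 d2 g" d1 x1 y1 hpsi1 "hkap1 g" Inl by (rule side1)
sublocale hcomp \<subseteq> S2: hside G2 "H_comp G1 G2 d1 d2 g" d2 "g x1" "g y1" hpsi2 "hkap2 G1 d1 g" Inr by (rule side2)

context hcomp
begin

lemma vertL: assumes z: "z \<in> edges C" and w: "Inl u \<in> ends C z" shows "u \<in> verts G1"
proof -
  consider (a) e where "e \<in> edges G1" "z = Inl (Inl e)" | (b) e where "e \<in> edges G2" "z = Inl (Inr e)"
    | (c) x where "x \<in> ends G1 d1" "z = Inr (x, g x)" using z unfolding edgesC by blast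
  thus ?thesis
  proof cases
    case a
    hence "u \<in> ends G1 e" using w endsC1 by auto
    thus ?thesis using cubicD(5)[OF cub1 a(1)] by blast
  next
    case b thus ?thesis using w endsC2 by auto
  next
    case c
    hence "u = x" using w endsC3 by auto
    thus ?thesis using cubicD(5)[OF cub1 d1] c(1) by blast
  qed
qed

lemma vertR: assumes z: "z \<in> edges C" and w: "Inr u \<in> ends C z" shows "u \<in> verts G2"
proof -
  consider (a) e where "e \<in> edges G1" "z = Inl (Inl e)" | (b) e where "e \<in> edges G2" "z = Inl (Inr e)"
    | (c) x where "x \<in> ends G1 d1" "z = Inr (x, g x)" using z unfolding edgesC by blast
  thus ?thesis
  proof cases
    case a thus ?thesis using w endsC1 by auto
  next
    case b
    hence "u \<in> ends G2 e" using w endsC2 by auto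
    thus ?thesis using cubicD(5)[OF cub2 b(1)] by blast
  next
    case c
    hence "u = g x" using w endsC3 by auto
    hence "u \<in> ends G2 d2" using c(1) bij bij_betwE by metis
    thus ?thesis using cubicD(5)[OF cub2 d2] by blast
  qed
qed

lemma cmp: "S1.rho c d1 = S2.rho c d2"
proof -
  have "S1.rho c d1 = c (Inr (x1, g x1))" unfolding S1.rho_def hkap1_def by simp
  moreover have "S2.rho c d2 = c (Inr (gi (g x1), g x1))" unfolding S2.rho_def hkap2_def by simp
  moreover have "gi (g x1) = x1" using gi_g dxy by blast
  ultimately show ?thesis by simp
qed

theorem H_main: "K3 C = K3 G1 * K3 G2"
proof (rule comp_card[where rA = S1.rho and rB = S2.rho and SpA = "{d1}" and SpB = "{d2}"])
  show "finite (edges C)" "finite (edges G1)" "finite (edges G2)" using fin cubicD(3) cub1 cub2 by auto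
  show "{d1} \<subseteq> edges G1" "{d2} \<subseteq> edges G2" using d1 d2 by auto
  show "\<And>e e'. e \<in> {d1} \<Longrightarrow> e' \<in> {d1} \<Longrightarrow> ends G1 e \<inter> ends G1 e' \<noteq> {}" using dxy by auto
  show "\<And>e e'. e \<in> {d2} \<Longrightarrow> e' \<in> {d2} \<Longrightarrow> ends G2 e \<inter> ends G2 e' \<noteq> {}" using dxy2 by auto
  show "\<And>c. c \<in> proper_3ec C \<Longrightarrow> S1.rho c \<in> proper_3ec G1 \<and> S2.rho c \<in> proper_3ec G2"
    using S1.rho_proper S2.rho_proper by blast
  show "\<And>c c'. c \<in> proper_3ec C \<Longrightarrow> c' \<in> proper_3ec C \<Longrightarrow> S1.rho c = S1.rho c' \<Longrightarrow> S2.rho c = S2.rho c' \<Longrightarrow> c = c'"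
  proof
    fix c c' z assume c: "c \<in> proper_3ec C" "c' \<in> proper_3ec C" and r: "S1.rho c = S1.rho c'" "S2.rho c = S2.rho c'"
    show "c z = c' z"
    proof (cases "z \<in> edges C")
      case True
      then consider (a) e where "e \<in> edges G1 - {d1}" "z = Inl (Inl e)" | (b) e where "e \<in> edges G2 - {d2}" "z = Inl (Inr e)"
        | (cc) x where "x \<in> ends G1 d1" "z = Inr (x, g x)" unfolding edgesC by blast
      thus ?thesis
      proof cases
        case a thus ?thesis using fun_cong[OF r(1), of e] unfolding S1.rho_def hpsi1_def by auto
      next
        case b thus ?thesis using fun_cong[OF r(2), of e] unfolding S2.rho_def hpsi2_def by auto
      next
        case cc
        have "S1.rho c d1 = c z" "S1.rho c' d1 = c' z" using S1.rho_d[OF c(1) cc(1)] S1.rho_d[OF c(2) cc(1)] cc(2)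
          unfolding hkap1_def by auto
        thus ?thesis using r(1) by simp
      qed
    next
      case False thus ?thesis using proper_out c by metis
    qed
  qed
  show "\<And>c c'. kempe_step C c c' \<Longrightarrow> (S1.rho c, S1.rho c') \<in> kempe_equiv G1 \<and> (S2.rho c, S2.rho c') \<in> kempe_equiv G2"
    using S1.down S2.down by blast
  show "\<And>c h. c \<in> proper_3ec C \<Longrightarrow> Nrel G1 {d1} (S1.rho c) h \<Longrightarrow>
          \<exists>c'. (c, c') \<in> kempe_equiv C \<and> S1.rho c' = h \<and> S2.rho c' = S2.rho c"
  proof -
    fix c h assume c: "c \<in> proper_3ec C" and N: "Nrel G1 {d1} (S1.rho c) h"
    then obtain a b S where ab: "a \<in> {1,2,3}" "b \<in> {1,2,3}" "a \<noteq> b" and cl: "closed G1 (S1.rho c) a b S"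
      and Sv: "S \<inter> {d1} = {}" and h: "h = kempe_switch (S1.rho c) a b S" unfolding Nrel_def by blast
    have Sd: "d1 \<notin> S" using Sv by blast
    have L: "closed C c a b (\<psi>1 ` S)" "S1.rho (kempe_switch c a b (\<psi>1 ` S)) = h"
      using S1.lift[OF c cl Sd] h by auto
    have "S2.rho (kempe_switch c a b (\<psi>1 ` S)) = S2.rho c"
      by (rule S2.rho_disj) (auto simp: hpsi1_def hpsi2_def hkap2_def)
    moreover have "(c, kempe_switch c a b (\<psi>1 ` S)) \<in> kempe_equiv C"
      using closed_switch_equiv[OF fin c L(1) ab] .
    ultimately show "\<exists>c'. (c, c') \<in> kempe_equiv C \<and> S1.rho c' = h \<and> S2.rho c' = S2.rho c" using L by blast
  qed
  show "\<And>c h. c \<in> proper_3ec C \<Longrightarrow> Nrel G2 {d2} (S2.rho c) h \<Longrightarrow>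
          \<exists>c'. (c, c') \<in> kempe_equiv C \<and> S2.rho c' = h \<and> S1.rho c' = S1.rho c"
  proof -
    fix c h assume c: "c \<in> proper_3ec C" and N: "Nrel G2 {d2} (S2.rho c) h"
    then obtain a b S where ab: "a \<in> {1,2,3}" "b \<in> {1,2,3}" "a \<noteq> b" and cl: "closed G2 (S2.rho c) a b S"
      and Sv: "S \<inter> {d2} = {}" and h: "h = kempe_switch (S2.rho c) a b S" unfolding Nrel_def by blast
    have Sd: "d2 \<notin> S" using Sv by blast
    have L: "closed C c a b (\<psi>2 ` S)" "S2.rho (kempe_switch c a b (\<psi>2 ` S)) = h"
      using S2.lift[OF c cl Sd] h by auto
    have "S1.rho (kempe_switch c a b (\<psi>2 ` S)) = S1.rho c"
      by (rule S1.rho_disj) (auto simp: hpsi1_def hpsi2_def hkap1_def)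
    moreover have "(c, kempe_switch c a b (\<psi>2 ` S)) \<in> kempe_equiv C"
      using closed_switch_equiv[OF fin c L(1) ab] .
    ultimately show "\<exists>c'. (c, c') \<in> kempe_equiv C \<and> S2.rho c' = h \<and> S1.rho c' = S1.rho c" using L by blast
  qed
  show "\<And>\<pi> c. perm3 \<pi> \<Longrightarrow> c \<in> proper_3ec C \<Longrightarrow>
      S1.rho (pm C \<pi> c) = pm G1 \<pi> (S1.rho c) \<and> S2.rho (pm C \<pi> c) = pm G2 \<pi> (S2.rho c)"
    using S1.rho_pm S2.rho_pm by blast
  show "\<And>c c' \<pi>. c \<in> proper_3ec C \<Longrightarrow> c' \<in> proper_3ec C \<Longrightarrow> perm3 \<pi> \<Longrightarrow>
      S2.rho c = S2.rho c' \<Longrightarrow> S1.rho c = pm G1 \<pi> (S1.rho c') \<Longrightarrow> (Nrel G1 {d1})\<^sup>*\<^sup>* (S1.rho c) (S1.rho c')"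
  proof -
    fix c c' \<pi> assume c: "c \<in> proper_3ec C" "c' \<in> proper_3ec C" and p: "perm3 \<pi>"
      and r2: "S2.rho c = S2.rho c'" and r1: "S1.rho c = pm G1 \<pi> (S1.rho c')"
    define h where "h = S1.rho c'"
    have hp: "h \<in> proper_3ec G1" unfolding h_def using S1.rho_proper[OF c(2)] .
    define \<alpha> where "\<alpha> = h d1"
    have a: "\<alpha> \<in> {1,2,3}" unfolding \<alpha>_def using proper_val[OF hp d1] .
    have fa: "\<pi> \<alpha> = \<alpha>"
    proof -
      have "\<pi> \<alpha> = S1.rho c d1" using r1 d1 unfolding pm_def \<alpha>_def h_def by simp
      also have "\<dots> = S2.rho c d2" by (rule cmp)
      also have "\<dots> = S2.rho c' d2" using r2 by simp
      also have "\<dots> = \<alpha>" unfolding \<alpha>_def h_def using cmp[of c'] by simp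
      finally show ?thesis .
    qed
    show "(Nrel G1 {d1})\<^sup>*\<^sup>* (S1.rho c) (S1.rho c')"
    proof (cases "\<forall>z\<in>{1,2,3}. \<pi> z = z")
      case True
      hence "pm G1 \<pi> h = h" using pm_id[OF hp] by blast
      thus ?thesis using r1 unfolding h_def by simp
    next
      case False
      then obtain \<beta> \<gamma> where bg: "\<beta> \<in> {1,2,3}" "\<gamma> \<in> {1,2,3}" "\<beta> \<noteq> \<gamma>" "\<alpha> \<noteq> \<beta>" "\<alpha> \<noteq> \<gamma>"
        and pe: "\<forall>z\<in>{1,2,3}. \<pi> z = sw \<beta> \<gamma> z" using perm_fix_one[OF p a fa] by blast
      define T where "T = {e \<in> edges G1. h e \<in> {\<beta>, \<gamma>}}"
      have cT: "closed G1 h \<beta> \<gamma> T" unfolding T_def by (rule AB_closed)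
      have r1': "S1.rho c = kempe_switch h \<beta> \<gamma> T"
        using r1 pm_cong[OF hp, of \<pi> "sw \<beta> \<gamma>"] pe pm_sw[OF hp] unfolding h_def T_def by simp
      have cl: "closed G1 (S1.rho c) \<beta> \<gamma> T" unfolding r1' by (rule closed_switch[OF cT cT])
      have "kempe_switch (S1.rho c) \<beta> \<gamma> T = h" unfolding r1' by (rule switch_switch[OF cT])
      moreover have "d1 \<notin> T" unfolding T_def using bg(4,5) unfolding \<alpha>_def by auto
      ultimately have "Nrel G1 {d1} (S1.rho c) h" unfolding Nrel_def
        using S1.rho_proper[OF c(1)] bg cl by blast
      thus ?thesis unfolding h_def by (metis r_into_rtranclp)
    qed
  qed
  show "\<And>c1 c2. c1 \<in> proper_3ec G1 \<Longrightarrow> c2 \<in> proper_3ec G2 \<Longrightarrow>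
      \<exists>c\<in>proper_3ec C. (S1.rho c, c1) \<in> kempe_equiv G1 \<and> (S2.rho c, c2) \<in> kempe_equiv G2"
  proof -
    fix c1 c2 assume c1: "c1 \<in> proper_3ec G1" and c2: "c2 \<in> proper_3ec G2"
    define c2' where "c2' = pm G2 (sw (c2 d2) (c1 d1)) c2"
    have k: "(c2, c2') \<in> kempe_equiv G2" unfolding c2'_def
      using ke_pm_sw[OF cubicD(3)[OF cub2] c2 proper_val[OF c2 d2] proper_val[OF c1 d1]] .
    have c2'p: "c2' \<in> proper_3ec G2" using ke_proper[OF k] by blast
    have m: "c2' d2 = c1 d1" unfolding c2'_def pm_def sw_def using d2 by simp
    define c where "c z = (if z \<in> edges C then (case z of Inl (Inl e) \<Rightarrow> c1 e | Inl (Inr e) \<Rightarrow> c2' e | Inr _ \<Rightarrow> c1 d1)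
       else undefined)" for z
    have l1: "c (S1.lam u e) = c1 e" if u: "u \<in> verts G1" and e: "e \<in> inc G1 u" for u e
    proof -
      have "S1.lam u e \<in> inc C (Inl u)" using S1.incC'[OF u] e by blast
      hence E: "S1.lam u e \<in> edges C" using incD(1) by metis
      show ?thesis
      proof (cases "e = d1")
        case True thus ?thesis using E unfolding c_def S1.lam_def hkap1_def by simp
      next
        case False thus ?thesis using E unfolding c_def S1.lam_def hpsi1_def by simp
      qed
    qed
    have l2: "c (S2.lam u e) = c2' e" if u: "u \<in> verts G2" and e: "e \<in> inc G2 u" for u e
    proof -
      have "S2.lam u e \<in> inc C (Inr u)" using S2.incC'[OF u] e by blast
      hence E: "S2.lam u e \<in> edges C" using incD(1) by metis
      show ?thesis
      proof (cases "e = d2")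
        case True thus ?thesis using E m unfolding c_def S2.lam_def hkap2_def by simp
      next
        case False thus ?thesis using E unfolding c_def S2.lam_def hpsi2_def by simp
      qed
    qed
    have cp: "c \<in> proper_3ec C"
    proof (rule proper_local)
      show "\<And>z. z \<notin> edges C \<Longrightarrow> c z = undefined" unfolding c_def by simp
      show "\<And>z. z \<in> edges C \<Longrightarrow> c z \<in> {1,2,3}"
      proof -
        fix z assume z: "z \<in> edges C"
        then consider (a) e where "e \<in> edges G1 - {d1}" "z = Inl (Inl e)" | (b) e where "e \<in> edges G2 - {d2}" "z = Inl (Inr e)"
          | (cc) x where "x \<in> ends G1 d1" "z = Inr (x, g x)" unfolding edgesC by blast
        thus "c z \<in> {1,2,3}"
        proof cases
          case a thus ?thesis using z proper_val[OF c1, of e] unfolding c_def by simp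
        next
          case b thus ?thesis using z proper_val[OF c2'p, of e] unfolding c_def by simp
        next
          case cc thus ?thesis using z proper_val[OF c1 d1] unfolding c_def by simp
        qed
      qed
      show "\<And>w. inj_on c (inc C w)"
      proof -
        fix w show "inj_on c (inc C w)"
        proof (cases w)
          case (Inl u)
          show ?thesis
          proof (cases "u \<in> verts G1")
            case True thus ?thesis using S1.inj_local[OF c1 l1[OF True] True] Inl by blast
          next
            case False
            hence "inc C w = {}" using vertL Inl unfolding inc_def by blast
            thus ?thesis by simp
          qed
        next
          case (Inr u)
          show ?thesis
          proof (cases "u \<in> verts G2")
            case True thus ?thesis using S2.inj_local[OF c2'p l2[OF True] True] Inr by blast
          next
            case False
            hence "inc C w = {}" using vertR Inr unfolding inc_def by blast
            thus ?thesis by simp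
          qed
        qed
      qed
    qed
    have x1e: "x1 \<in> ends G1 d1" using dxy by blast
    have "S1.rho c = c1"
    proof (rule S1.rho_eq[OF c1])
      show "c (hkap1 g x1) = c1 d1" using S1.kapE[OF x1e] unfolding c_def hkap1_def by simp
      show "\<And>e. e \<in> edges G1 - {d1} \<Longrightarrow> c (hpsi1 e) = c1 e" using S1.psiE unfolding c_def hpsi1_def by simp
    qed
    moreover have "S2.rho c = c2'"
    proof (rule S2.rho_eq[OF c2'p])
      have "g x1 \<in> ends G2 d2" using dxy2 by blast
      thus "c (hkap2 G1 d1 g (g x1)) = c2' d2" using S2.kapE m unfolding c_def hkap2_def by simp
      show "\<And>e. e \<in> edges G2 - {d2} \<Longrightarrow> c (hpsi2 e) = c2' e" using S2.psiE unfolding c_def hpsi2_def by simp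
    qed
    ultimately show "\<exists>c\<in>proper_3ec C. (S1.rho c, c1) \<in> kempe_equiv G1 \<and> (S2.rho c, c2) \<in> kempe_equiv G2"
      using cp ke_refl[OF c1] ke_sym[OF k] by metis
  qed
qed

end


theorem theorem12:
  fixes G1 :: "('v1, 'e1) mgraph" and G2 :: "('v2, 'e2) mgraph"
  assumes "cubic G1" and "cubic G2"
    and "K3 G1 = a" and "K3 G2 = b"
  shows "(\<forall>v1 v2 f. v1 \<in> verts G1 \<and> v2 \<in> verts G2 \<and> bij_betw f (inc G1 v1) (inc G2 v2)
            \<longrightarrow> K3 (Y_comp G1 G2 v1 v2 f) = a * b)
       \<and> (\<forall>d1 d2 g. d1 \<in> edges G1 \<and> d2 \<in> edges G2 \<and> bij_betw g (ends G1 d1) (ends G2 d2)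
            \<longrightarrow> K3 (H_comp G1 G2 d1 d2 g) = a * b)"
proof (intro conjI allI impI)
  fix v1 v2 f assume h: "v1 \<in> verts G1 \<and> v2 \<in> verts G2 \<and> bij_betw f (inc G1 v1) (inc G2 v2)"
  interpret Y: ycomp G1 G2 v1 v2 f
    using assms(1,2) h by unfold_locales auto
  show "K3 (Y_comp G1 G2 v1 v2 f) = a * b" using Y.Y_main assms(3,4) by simp
next
  fix d1 d2 g assume h: "d1 \<in> edges G1 \<and> d2 \<in> edges G2 \<and> bij_betw g (ends G1 d1) (ends G2 d2)"
  have "card (ends G1 d1) = 2" using cubicD(6)[OF assms(1)] h by blast
  then obtain x1 y1 where xy: "ends G1 d1 = {x1, y1}" "x1 \<noteq> y1" by (metis card_2_iff)
  interpret H: hcomp G1 G2 d1 d2 g x1 y1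
    using assms(1,2) h xy by unfold_locales auto
  show "K3 (H_comp G1 G2 d1 d2 g) = a * b" using H.H_main assms(3,4) by simp
qed

end
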